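(* Let $B$ be the Boolean lattice of subsets of a finite set $A$ and $F$ a sheaf on $B$. Suppose there is $a\in A$ such that for every $x\in B_a$ the structure map $F^{x\cup\{a\}}_x:F(x\cup\{a\})\to F(x)$ is injective. Then $$\mathrm{HC}_*(B;F)\cong\mathrm{HC}_*(B_a;F_a/F^a).$$
   Context: A sheaf $F$ on a poset assigns an $R$-module $F(x)$ ($R$ commutative with $1$) to each element and a homomorphism $F^y_x:F(y)\to F(x)$ to each $x\le y$, functorially. $B_a$ is the sub-Boolean lattice of subsets of $A\setminus\{a\}$. $F_a$ is the restriction of $F$ to $B_a$. $F^a$ is the sheaf on $B_a$ with $F^a(x)=F(x\cup\{a\})$ and, for $x\subseteq y$ in $B_a$, structure map $F^{y\cup\{a\}}_{x\cup\{a\}}$. The maps $F^{x\cup\{a\}}_x$ form an injective morphism of sheaves $F^a\to F_a$ on $B_a$, and $F_a/F^a$ is the quotient sheaf. Cellular homology of a Boolean lattice $B'$ of subsets of $\{a_1,\dots,a_n\}$ with sheaf $G$: $C_k(B';G)=\bigoplus_{|x|=k}G(x)$ with differential $\sum\varepsilon^x_yG^x_y$ over $y\subset x$, $|y|=|x|-1$, where $\varepsilon^x_y=(-1)^{j-1}$ if $x=\{a_{i_1},\dots,a_{i_k}\}$ ($i_1<\cdots<i_k$) and $y=x\setminus\{a_{i_j}\}$; $\mathrm{HC}_*(B';G)$ is its homology. *)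

theory Defs
  imports "HOL-Algebra.Module" "HOL-Algebra.AbelCoset"
begin

definition module_hom ::
  "'r ring \<Rightarrow> ('r, 'm) module \<Rightarrow> ('r, 'n) module \<Rightarrow> ('m \<Rightarrow> 'n) set" where
  "module_hom R M N = {h. h \<in> carrier M \<rightarrow> carrier N \<and>
     (\<forall>u\<in>carrier M. \<forall>v\<in>carrier M. h (u \<oplus>\<^bsub>M\<^esub> v) = h u \<oplus>\<^bsub>N\<^esub> h v) \<and>
     (\<forall>r\<in>carrier R. \<forall>v\<in>carrier M. h (r \<odot>\<^bsub>M\<^esub> v) = r \<odot>\<^bsub>N\<^esub> h v)}"

definition module_isomorphic ::
  "'r ring \<Rightarrow> ('r, 'm) module \<Rightarrow> ('r, 'n) module \<Rightarrow> bool" where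
  "module_isomorphic R M N \<longleftrightarrow>
     (\<exists>h. h \<in> module_hom R M N \<and> bij_betw h (carrier M) (carrier N))"

text \<open>A sheaf of R-modules on the Boolean lattice of subsets of S:
  G x is the module at x, and g y x is the structure map G(y) -> G(x) for x \<subseteq> y.\<close>
definition is_sheaf ::
  "'r ring \<Rightarrow> 'a set \<Rightarrow> ('a set \<Rightarrow> ('r, 'm) module) \<Rightarrow> ('a set \<Rightarrow> 'a set \<Rightarrow> 'm \<Rightarrow> 'm) \<Rightarrow> bool" where
  "is_sheaf R S G g \<longleftrightarrow>
     (\<forall>x. x \<subseteq> S \<longrightarrow> module R (G x)) \<and>
     (\<forall>x y. x \<subseteq> y \<and> y \<subseteq> S \<longrightarrow> g y x \<in> module_hom R (G y) (G x)) \<and>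
     (\<forall>x. x \<subseteq> S \<longrightarrow> (\<forall>v\<in>carrier (G x). g x x v = v)) \<and>
     (\<forall>x y z. x \<subseteq> y \<and> y \<subseteq> z \<and> z \<subseteq> S \<longrightarrow>
        (\<forall>v\<in>carrier (G z). g y x (g z y v) = g z x v))"

definition quot_module ::
  "('r, 'm) module \<Rightarrow> 'm set \<Rightarrow> 'm set \<Rightarrow> ('r, 'm set) module" where
  "quot_module M Z N =
    \<lparr> carrier = (\<lambda>v. N +>\<^bsub>M\<^esub> v) ` Z,
      mult = (\<lambda>_ _. undefined), one = undefined,
      zero = N,
      add = (\<lambda>X Y. X <+>\<^bsub>M\<^esub> Y),
      smult = (\<lambda>r X. \<Union>v\<in>X. N +>\<^bsub>M\<^esub> (r \<odot>\<^bsub>M\<^esub> v)) \<rparr>"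

text \<open>Cellular chains C_k(B';G) = direct sum of G(x) over x \<subseteq> S with |x| = k,
  represented as extensional functions on the cells.\<close>
definition cell_chains ::
  "'a set \<Rightarrow> ('a set \<Rightarrow> ('r, 'm) module) \<Rightarrow> nat \<Rightarrow> ('r, 'a set \<Rightarrow> 'm) module" where
  "cell_chains S G k =
    \<lparr> carrier = {c. (\<forall>x. x \<subseteq> S \<and> card x = k \<longrightarrow> c x \<in> carrier (G x)) \<and>
                   (\<forall>x. \<not> (x \<subseteq> S \<and> card x = k) \<longrightarrow> c x = undefined)},
      mult = (\<lambda>_ _. undefined), one = undefined,
      zero = (\<lambda>x. if x \<subseteq> S \<and> card x = k then \<zero>\<^bsub>G x\<^esub> else undefined),
      add = (\<lambda>c d x. if x \<subseteq> S \<and> card x = k then c x \<oplus>\<^bsub>G x\<^esub> d x else undefined),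
      smult = (\<lambda>r c x. if x \<subseteq> S \<and> card x = k then r \<odot>\<^bsub>G x\<^esub> c x else undefined) \<rparr>"

text \<open>For a cell y with |y| = k and x = insert b y,
  the sign is (-1)^(j-1) where b is the j-th element of x in the order of the ground set,
  i.e. j - 1 = card {b' \<in> x. b' < b}.\<close>
definition cell_diff ::
  "'r ring \<Rightarrow> 'a::linorder set \<Rightarrow> ('a set \<Rightarrow> ('r, 'm) module) \<Rightarrow> ('a set \<Rightarrow> 'a set \<Rightarrow> 'm \<Rightarrow> 'm)
    \<Rightarrow> nat \<Rightarrow> ('a set \<Rightarrow> 'm) \<Rightarrow> ('a set \<Rightarrow> 'm)" where
  "cell_diff R S G g k c =
    (\<lambda>y. if y \<subseteq> S \<and> card y = k then
           finsum (G y)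
             (\<lambda>b. ((\<ominus>\<^bsub>R\<^esub> \<one>\<^bsub>R\<^esub>) [^]\<^bsub>R\<^esub> card {b' \<in> insert b y. b' < b})
                    \<odot>\<^bsub>G y\<^esub> g (insert b y) y (c (insert b y)))
             (S - y)
         else undefined)"

definition cell_cycles ::
  "'r ring \<Rightarrow> 'a::linorder set \<Rightarrow> ('a set \<Rightarrow> ('r, 'm) module) \<Rightarrow> ('a set \<Rightarrow> 'a set \<Rightarrow> 'm \<Rightarrow> 'm)
    \<Rightarrow> nat \<Rightarrow> ('a set \<Rightarrow> 'm) set" where
  "cell_cycles R S G g k =
    {c \<in> carrier (cell_chains S G k).
       k = 0 \<or> cell_diff R S G g (k - 1) c = \<zero>\<^bsub>cell_chains S G (k - 1)\<^esub>}"

definition cell_boundaries ::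
  "'r ring \<Rightarrow> 'a::linorder set \<Rightarrow> ('a set \<Rightarrow> ('r, 'm) module) \<Rightarrow> ('a set \<Rightarrow> 'a set \<Rightarrow> 'm \<Rightarrow> 'm)
    \<Rightarrow> nat \<Rightarrow> ('a set \<Rightarrow> 'm) set" where
  "cell_boundaries R S G g k = cell_diff R S G g k ` carrier (cell_chains S G (Suc k))"

definition HC ::
  "'r ring \<Rightarrow> 'a::linorder set \<Rightarrow> ('a set \<Rightarrow> ('r, 'm) module) \<Rightarrow> ('a set \<Rightarrow> 'a set \<Rightarrow> 'm \<Rightarrow> 'm)
    \<Rightarrow> nat \<Rightarrow> ('r, ('a set \<Rightarrow> 'm) set) module" where
  "HC R S G g k = quot_module (cell_chains S G k) (cell_cycles R S G g k) (cell_boundaries R S G g k)"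

text \<open>The quotient sheaf F_a / F^a on B_a: at x it is F(x) / F^{x \<union> {a}}_x (F(x \<union> {a})).\<close>
definition quot_sheaf ::
  "('a set \<Rightarrow> ('r, 'm) module) \<Rightarrow> ('a set \<Rightarrow> 'a set \<Rightarrow> 'm \<Rightarrow> 'm) \<Rightarrow> 'a
    \<Rightarrow> 'a set \<Rightarrow> ('r, 'm set) module" where
  "quot_sheaf F f a x =
     quot_module (F x) (carrier (F x)) (f (insert a x) x ` carrier (F (insert a x)))"

definition quot_sheaf_map ::
  "('a set \<Rightarrow> ('r, 'm) module) \<Rightarrow> ('a set \<Rightarrow> 'a set \<Rightarrow> 'm \<Rightarrow> 'm) \<Rightarrow> 'a
    \<Rightarrow> 'a set \<Rightarrow> 'a set \<Rightarrow> 'm set \<Rightarrow> 'm set" where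
  "quot_sheaf_map F f a y x X =
     (\<Union>v\<in>X. (f (insert a x) x ` carrier (F (insert a x))) +>\<^bsub>F x\<^esub> f y x v)"

end

theory Submission
  imports Defs
begin



lemma module_hom_closed:
  "h \<in> module_hom R M N \<Longrightarrow> x \<in> carrier M \<Longrightarrow> h x \<in> carrier N"
  unfolding module_hom_def by auto

lemma module_hom_add:
  "h \<in> module_hom R M N \<Longrightarrow> x \<in> carrier M \<Longrightarrow> y \<in> carrier M \<Longrightarrow> h (x \<oplus>\<^bsub>M\<^esub> y) = h x \<oplus>\<^bsub>N\<^esub> h y"
  unfolding module_hom_def by auto

lemma module_hom_smult:
  "h \<in> module_hom R M N \<Longrightarrow> r \<in> carrier R \<Longrightarrow> x \<in> carrier M \<Longrightarrow> h (r \<odot>\<^bsub>M\<^esub> x) = r \<odot>\<^bsub>N\<^esub> h x"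
  unfolding module_hom_def by auto

definition submod :: "'r ring \<Rightarrow> ('r, 'm) module \<Rightarrow> 'm set \<Rightarrow> bool" where
  "submod R M H \<longleftrightarrow> additive_subgroup H M \<and> (\<forall>r\<in>carrier R. \<forall>x\<in>H. r \<odot>\<^bsub>M\<^esub> x \<in> H)"

lemma submodI:
  assumes "module R M" "H \<subseteq> carrier M" "\<zero>\<^bsub>M\<^esub> \<in> H"
    "\<And>x y. x \<in> H \<Longrightarrow> y \<in> H \<Longrightarrow> x \<oplus>\<^bsub>M\<^esub> y \<in> H"
    "\<And>r x. r \<in> carrier R \<Longrightarrow> x \<in> H \<Longrightarrow> r \<odot>\<^bsub>M\<^esub> x \<in> H"
  shows "submod R M H"
proof -
  interpret M: module R M by fact
  have inv: "\<ominus>\<^bsub>M\<^esub> x \<in> H" if x: "x \<in> H" for x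
  proof -
    have xc: "x \<in> carrier M" using assms x by auto
    have "(\<ominus>\<^bsub>R\<^esub> \<one>\<^bsub>R\<^esub>) \<odot>\<^bsub>M\<^esub> x \<in> H" using assms x by simp
    moreover have "(\<ominus>\<^bsub>R\<^esub> \<one>\<^bsub>R\<^esub>) \<odot>\<^bsub>M\<^esub> x = \<ominus>\<^bsub>M\<^esub> x"
      using M.smult_l_minus[of "\<one>\<^bsub>R\<^esub>" x] xc by simp
    ultimately show ?thesis by simp
  qed
  have "subgroup H (add_monoid M)"
    apply (rule M.add.subgroupI)
    subgoal using assms(2) by simp
    subgoal using assms(3) by blast
    subgoal for x using inv[of x] unfolding a_inv_def by simp
    subgoal for x y using assms(4)[of x y] by simp
    done
  then show ?thesis unfolding submod_def using assms additive_subgroupI by blast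
qed

lemma submodD0:
  assumes "submod R M H"
  shows "additive_subgroup H M" "\<And>r x. r \<in> carrier R \<Longrightarrow> x \<in> H \<Longrightarrow> r \<odot>\<^bsub>M\<^esub> x \<in> H"
  using assms unfolding submod_def by blast+

lemma submodD:
  assumes "module R M" "submod R M H"
  shows "H \<subseteq> carrier M" "\<zero>\<^bsub>M\<^esub> \<in> H"
    "\<And>x y. x \<in> H \<Longrightarrow> y \<in> H \<Longrightarrow> x \<oplus>\<^bsub>M\<^esub> y \<in> H"
    "\<And>x. x \<in> H \<Longrightarrow> \<ominus>\<^bsub>M\<^esub> x \<in> H"
    "\<And>r x. r \<in> carrier R \<Longrightarrow> x \<in> H \<Longrightarrow> r \<odot>\<^bsub>M\<^esub> x \<in> H"
    "abelian_subgroup H M"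
proof -
  interpret M: module R M by fact
  interpret H: additive_subgroup H M using submodD0[OF assms(2)] by blast
  show "H \<subseteq> carrier M" by (rule H.a_subset)
  show "\<zero>\<^bsub>M\<^esub> \<in> H" by (rule H.zero_closed)
  show "\<And>x y. x \<in> H \<Longrightarrow> y \<in> H \<Longrightarrow> x \<oplus>\<^bsub>M\<^esub> y \<in> H" by (rule H.a_closed)
  show "\<And>x. x \<in> H \<Longrightarrow> \<ominus>\<^bsub>M\<^esub> x \<in> H" by (rule H.a_inv_closed)
  show "\<And>r x. r \<in> carrier R \<Longrightarrow> x \<in> H \<Longrightarrow> r \<odot>\<^bsub>M\<^esub> x \<in> H"
    using submodD0[OF assms(2)] by blast
  show "abelian_subgroup H M"
    by (rule abelian_subgroupI3[OF H.is_additive_subgroup module.axioms(2)[OF assms(1)]])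
qed

lemma coset_eq_iff:
  assumes "module R M" "submod R M H" "x \<in> carrier M" "y \<in> carrier M"
  shows "(H +>\<^bsub>M\<^esub> x = H +>\<^bsub>M\<^esub> y) \<longleftrightarrow> x \<oplus>\<^bsub>M\<^esub> \<ominus>\<^bsub>M\<^esub> y \<in> H"
proof -
  interpret M: module R M by fact
  interpret H: abelian_subgroup H M using submodD[OF assms(1,2)] by blast
  show ?thesis
  proof
    assume "H +>\<^bsub>M\<^esub> x = H +>\<^bsub>M\<^esub> y"
    then have "x \<in> H +>\<^bsub>M\<^esub> y" using H.a_rcos_self assms by blast
    then show "x \<oplus>\<^bsub>M\<^esub> \<ominus>\<^bsub>M\<^esub> y \<in> H" using H.a_rcos_module_imp assms by blast
  next
    assume "x \<oplus>\<^bsub>M\<^esub> \<ominus>\<^bsub>M\<^esub> y \<in> H"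
    then have "x \<in> H +>\<^bsub>M\<^esub> y" using H.a_rcos_module_rev assms by blast
    then show "H +>\<^bsub>M\<^esub> x = H +>\<^bsub>M\<^esub> y" using H.a_repr_independence' assms by metis
  qed
qed

lemma coset_smult:
  assumes "module R M" "submod R M H" "v \<in> carrier M" "r \<in> carrier R"
  shows "(\<Union>w\<in>H +>\<^bsub>M\<^esub> v. H +>\<^bsub>M\<^esub> (r \<odot>\<^bsub>M\<^esub> w)) = H +>\<^bsub>M\<^esub> (r \<odot>\<^bsub>M\<^esub> v)"
proof -
  interpret M: module R M by fact
  note sd = submodD[OF assms(1,2)]
  interpret H: abelian_subgroup H M using sd by blast
  have "H +>\<^bsub>M\<^esub> (r \<odot>\<^bsub>M\<^esub> w) = H +>\<^bsub>M\<^esub> (r \<odot>\<^bsub>M\<^esub> v)" if w: "w \<in> H +>\<^bsub>M\<^esub> v" for w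
  proof -
    obtain h where h: "h \<in> H" "w = h \<oplus>\<^bsub>M\<^esub> v" using w unfolding a_r_coset_def' by auto
    have hc: "h \<in> carrier M" using h sd by auto
    have "r \<odot>\<^bsub>M\<^esub> w = r \<odot>\<^bsub>M\<^esub> h \<oplus>\<^bsub>M\<^esub> r \<odot>\<^bsub>M\<^esub> v"
      using h hc assms M.smult_r_distr by simp
    moreover have "r \<odot>\<^bsub>M\<^esub> h \<in> H" using sd h assms by auto
    ultimately have "r \<odot>\<^bsub>M\<^esub> w \<in> H +>\<^bsub>M\<^esub> (r \<odot>\<^bsub>M\<^esub> v)"
      unfolding a_r_coset_def' by auto
    then show ?thesis using H.a_repr_independence' assms by (metis M.smult_closed)
  qed
  moreover have "v \<in> H +>\<^bsub>M\<^esub> v" using H.a_rcos_self assms by blast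
  ultimately show ?thesis by blast
qed

lemma module_hom_zero:
  assumes "module R M" "module R N" "h \<in> module_hom R M N"
  shows "h \<zero>\<^bsub>M\<^esub> = \<zero>\<^bsub>N\<^esub>"
proof -
  interpret M: module R M by fact
  interpret N: module R N by fact
  have e: "h (\<zero>\<^bsub>R\<^esub> \<odot>\<^bsub>M\<^esub> \<zero>\<^bsub>M\<^esub>) = \<zero>\<^bsub>R\<^esub> \<odot>\<^bsub>N\<^esub> h \<zero>\<^bsub>M\<^esub>"
    by (rule module_hom_smult[OF assms(3)]) simp_all
  have "h \<zero>\<^bsub>M\<^esub> \<in> carrier N" using module_hom_closed[OF assms(3)] by simp
  then have "\<zero>\<^bsub>R\<^esub> \<odot>\<^bsub>N\<^esub> h \<zero>\<^bsub>M\<^esub> = \<zero>\<^bsub>N\<^esub>" by simp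
  moreover have "\<zero>\<^bsub>R\<^esub> \<odot>\<^bsub>M\<^esub> \<zero>\<^bsub>M\<^esub> = \<zero>\<^bsub>M\<^esub>" by simp
  ultimately show ?thesis using e by metis
qed

lemma module_hom_inv:
  assumes "module R M" "module R N" "h \<in> module_hom R M N" "x \<in> carrier M"
  shows "h (\<ominus>\<^bsub>M\<^esub> x) = \<ominus>\<^bsub>N\<^esub> h x"
proof -
  interpret M: module R M by fact
  interpret N: module R N by fact
  have "h (\<ominus>\<^bsub>M\<^esub> x) = h ((\<ominus>\<^bsub>R\<^esub> \<one>\<^bsub>R\<^esub>) \<odot>\<^bsub>M\<^esub> x)" using M.smult_l_minus[of "\<one>\<^bsub>R\<^esub>" x] assms by simp
  also have "\<dots> = (\<ominus>\<^bsub>R\<^esub> \<one>\<^bsub>R\<^esub>) \<odot>\<^bsub>N\<^esub> h x" using assms(3,4) unfolding module_hom_def by simp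
  also have "\<dots> = \<ominus>\<^bsub>N\<^esub> h x" using N.smult_l_minus[of "\<one>\<^bsub>R\<^esub>" "h x"] assms(3,4)
    unfolding module_hom_def by (simp add: Pi_iff)
  finally show ?thesis .
qed

lemma module_hom_finsum:
  assumes "module R M" "module R N" "h \<in> module_hom R M N" "finite I" "g \<in> I \<rightarrow> carrier M"
  shows "h (finsum M g I) = finsum N (\<lambda>i. h (g i)) I"
  using assms(4,5)
proof (induction I rule: finite_induct)
  case empty
  interpret M: module R M by fact
  interpret N: module R N by fact
  show ?case using module_hom_zero[OF assms(1-3)] by simp
next
  case (insert i I)
  interpret M: module R M by fact
  interpret N: module R N by fact
  have gi: "g i \<in> carrier M" and gI: "g \<in> I \<rightarrow> carrier M" using insert by auto
  have hg: "(\<lambda>i. h (g i)) \<in> I \<rightarrow> carrier N" "h (g i) \<in> carrier N"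
    using gI gi module_hom_closed[OF assms(3)] by auto
  have "h (finsum M g (insert i I)) = h (g i \<oplus>\<^bsub>M\<^esub> finsum M g I)"
    using insert gi gI by (simp add: M.finsum_insert)
  also have "\<dots> = h (g i) \<oplus>\<^bsub>N\<^esub> h (finsum M g I)"
    using module_hom_add[OF assms(3)] gi gI M.finsum_closed by blast
  also have "\<dots> = finsum N (\<lambda>i. h (g i)) (insert i I)"
    using insert hg by (simp add: N.finsum_insert)
  finally show ?case .
qed

lemma quot_add:
  assumes "module R M" "submod R M H" "x \<in> carrier M" "y \<in> carrier M"
  shows "(H +>\<^bsub>M\<^esub> x) \<oplus>\<^bsub>quot_module M Z H\<^esub> (H +>\<^bsub>M\<^esub> y) = H +>\<^bsub>M\<^esub> (x \<oplus>\<^bsub>M\<^esub> y)"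
proof -
  interpret H: abelian_subgroup H M using submodD(6)[OF assms(1,2)] .
  show ?thesis unfolding quot_module_def using H.a_rcos_sum assms(3,4) by simp
qed

lemma quot_smult:
  assumes "module R M" "submod R M H" "x \<in> carrier M" "r \<in> carrier R"
  shows "r \<odot>\<^bsub>quot_module M Z H\<^esub> (H +>\<^bsub>M\<^esub> x) = H +>\<^bsub>M\<^esub> (r \<odot>\<^bsub>M\<^esub> x)"
  unfolding quot_module_def using coset_smult[OF assms] by simp

lemma quot_zero:
  assumes "module R M" "submod R M H"
  shows "\<zero>\<^bsub>quot_module M Z H\<^esub> = H +>\<^bsub>M\<^esub> \<zero>\<^bsub>M\<^esub>"
proof -
  interpret M: module R M by fact
  have "H \<subseteq> carrier M" using submodD[OF assms] by blast
  then show ?thesis unfolding quot_module_def by simp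
qed

lemma quot_carrier:
  "carrier (quot_module M Z H) = (\<lambda>v. H +>\<^bsub>M\<^esub> v) ` Z"
  unfolding quot_module_def by simp

lemma quot_module_module:
  assumes "module R M" "submod R M H"
  shows "module R (quot_module M (carrier M) H)" (is "module R ?Q")
proof -
  interpret M: module R M by fact
  have qa: "\<And>x y. x \<in> carrier M \<Longrightarrow> y \<in> carrier M \<Longrightarrow>
     (H +>\<^bsub>M\<^esub> x) \<oplus>\<^bsub>?Q\<^esub> (H +>\<^bsub>M\<^esub> y) = H +>\<^bsub>M\<^esub> (x \<oplus>\<^bsub>M\<^esub> y)"
    by (rule quot_add[OF assms])
  have qs: "\<And>r x. x \<in> carrier M \<Longrightarrow> r \<in> carrier R \<Longrightarrow>
     r \<odot>\<^bsub>?Q\<^esub> (H +>\<^bsub>M\<^esub> x) = H +>\<^bsub>M\<^esub> (r \<odot>\<^bsub>M\<^esub> x)"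
    by (rule quot_smult[OF assms])
  have qz: "\<zero>\<^bsub>?Q\<^esub> = H +>\<^bsub>M\<^esub> \<zero>\<^bsub>M\<^esub>" by (rule quot_zero[OF assms])
  have car: "X \<in> carrier ?Q \<longleftrightarrow> (\<exists>v\<in>carrier M. X = H +>\<^bsub>M\<^esub> v)" for X
    unfolding quot_carrier by blast
  have carI: "H +>\<^bsub>M\<^esub> v \<in> carrier ?Q" if "v \<in> carrier M" for v
    using that unfolding quot_carrier by blast
  have ag: "abelian_group ?Q"
  proof (rule abelian_groupI)
    fix X Y assume "X \<in> carrier ?Q" "Y \<in> carrier ?Q"
    then obtain x y where xy: "x \<in> carrier M" "y \<in> carrier M" "X = H +>\<^bsub>M\<^esub> x" "Y = H +>\<^bsub>M\<^esub> y"
      unfolding car by blast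
    show "X \<oplus>\<^bsub>?Q\<^esub> Y \<in> carrier ?Q" unfolding xy(3,4) qa[OF xy(1,2)] by (rule carI) (simp add: xy)
    show "X \<oplus>\<^bsub>?Q\<^esub> Y = Y \<oplus>\<^bsub>?Q\<^esub> X" unfolding xy(3,4) qa[OF xy(1,2)] qa[OF xy(2,1)]
      by (simp add: M.a_comm xy)
  next
    show "\<zero>\<^bsub>?Q\<^esub> \<in> carrier ?Q" unfolding qz by (rule carI) simp
  next
    fix X Y Z assume "X \<in> carrier ?Q" "Y \<in> carrier ?Q" "Z \<in> carrier ?Q"
    then obtain x y z where xy: "x \<in> carrier M" "y \<in> carrier M" "z \<in> carrier M"
      "X = H +>\<^bsub>M\<^esub> x" "Y = H +>\<^bsub>M\<^esub> y" "Z = H +>\<^bsub>M\<^esub> z"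
      unfolding car by meson
    show "X \<oplus>\<^bsub>?Q\<^esub> Y \<oplus>\<^bsub>?Q\<^esub> Z = X \<oplus>\<^bsub>?Q\<^esub> (Y \<oplus>\<^bsub>?Q\<^esub> Z)"
      unfolding xy(4-6) qa[OF xy(1,2)] qa[OF xy(2,3)] qa[OF M.add.m_closed[OF xy(1,2)] xy(3)]
        qa[OF xy(1) M.add.m_closed[OF xy(2,3)]]
      by (simp add: M.a_assoc xy)
  next
    fix X assume "X \<in> carrier ?Q"
    then obtain x where xy: "x \<in> carrier M" "X = H +>\<^bsub>M\<^esub> x" unfolding car by blast
    show "\<zero>\<^bsub>?Q\<^esub> \<oplus>\<^bsub>?Q\<^esub> X = X" unfolding xy(2) qz qa[OF M.zero_closed xy(1)]
      by (simp add: xy)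
    have "(H +>\<^bsub>M\<^esub> (\<ominus>\<^bsub>M\<^esub> x)) \<oplus>\<^bsub>?Q\<^esub> X = \<zero>\<^bsub>?Q\<^esub>"
      unfolding xy(2) qz qa[OF M.a_inv_closed[OF xy(1)] xy(1)] by (simp add: xy M.l_neg)
    moreover have "H +>\<^bsub>M\<^esub> (\<ominus>\<^bsub>M\<^esub> x) \<in> carrier ?Q" by (rule carI) (simp add: xy)
    ultimately show "\<exists>y\<in>carrier ?Q. y \<oplus>\<^bsub>?Q\<^esub> X = \<zero>\<^bsub>?Q\<^esub>" by blast
  qed
  show ?thesis
  proof (rule moduleI[OF M.is_cring ag])
    fix r X assume r: "r \<in> carrier R" and "X \<in> carrier ?Q"
    then obtain x where xy: "x \<in> carrier M" "X = H +>\<^bsub>M\<^esub> x" unfolding car by blast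
    show "r \<odot>\<^bsub>?Q\<^esub> X \<in> carrier ?Q" unfolding xy(2) qs[OF xy(1) r] by (rule carI) (simp add: xy r)
  next
    fix r s X assume r: "r \<in> carrier R" "s \<in> carrier R" and "X \<in> carrier ?Q"
    then obtain x where xy: "x \<in> carrier M" "X = H +>\<^bsub>M\<^esub> x" unfolding car by blast
    have rs: "r \<oplus>\<^bsub>R\<^esub> s \<in> carrier R" "r \<otimes>\<^bsub>R\<^esub> s \<in> carrier R" using r by simp_all
    show "(r \<oplus>\<^bsub>R\<^esub> s) \<odot>\<^bsub>?Q\<^esub> X = r \<odot>\<^bsub>?Q\<^esub> X \<oplus>\<^bsub>?Q\<^esub> s \<odot>\<^bsub>?Q\<^esub> X"
      unfolding xy(2) qs[OF xy(1) r(1)] qs[OF xy(1) r(2)] qs[OF xy(1) rs(1)]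
        qa[OF M.smult_closed[OF r(1) xy(1)] M.smult_closed[OF r(2) xy(1)]]
      by (simp add: M.smult_l_distr r xy)
    show "(r \<otimes>\<^bsub>R\<^esub> s) \<odot>\<^bsub>?Q\<^esub> X = r \<odot>\<^bsub>?Q\<^esub> (s \<odot>\<^bsub>?Q\<^esub> X)"
      unfolding xy(2) qs[OF xy(1) r(2)] qs[OF M.smult_closed[OF r(2) xy(1)] r(1)] qs[OF xy(1) rs(2)]
      by (simp add: M.smult_assoc1 r xy)
  next
    fix r X Y assume r: "r \<in> carrier R" and "X \<in> carrier ?Q" "Y \<in> carrier ?Q"
    then obtain x y where xy: "x \<in> carrier M" "y \<in> carrier M" "X = H +>\<^bsub>M\<^esub> x" "Y = H +>\<^bsub>M\<^esub> y"
      unfolding car by meson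
    show "r \<odot>\<^bsub>?Q\<^esub> (X \<oplus>\<^bsub>?Q\<^esub> Y) = r \<odot>\<^bsub>?Q\<^esub> X \<oplus>\<^bsub>?Q\<^esub> r \<odot>\<^bsub>?Q\<^esub> Y"
      unfolding xy(3,4) qa[OF xy(1,2)] qs[OF xy(1) r] qs[OF xy(2) r] qs[OF M.add.m_closed[OF xy(1,2)] r]
        qa[OF M.smult_closed[OF r xy(1)] M.smult_closed[OF r xy(2)]]
      by (simp add: M.smult_r_distr r xy)
  next
    fix X assume "X \<in> carrier ?Q"
    then obtain x where xy: "x \<in> carrier M" "X = H +>\<^bsub>M\<^esub> x" unfolding car by blast
    show "\<one>\<^bsub>R\<^esub> \<odot>\<^bsub>?Q\<^esub> X = X" unfolding xy(2) qs[OF xy(1) M.one_closed] by (simp add: xy)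
  qed
qed

lemma quot_map_hom:
  assumes "module R M" "submod R M H"
  shows "(\<lambda>v. H +>\<^bsub>M\<^esub> v) \<in> module_hom R M (quot_module M (carrier M) H)"
  unfolding module_hom_def using quot_add[OF assms] quot_smult[OF assms] module.smult_closed[OF assms(1)]
  by (auto simp: quot_carrier)

lemma quot_map_zero_iff:
  assumes "module R M" "submod R M H" "v \<in> carrier M"
  shows "H +>\<^bsub>M\<^esub> v = \<zero>\<^bsub>quot_module M Z H\<^esub> \<longleftrightarrow> v \<in> H"
proof -
  interpret M: module R M by fact
  have z: "\<ominus>\<^bsub>M\<^esub> \<zero>\<^bsub>M\<^esub> = \<zero>\<^bsub>M\<^esub>"
  proof -
    have "\<zero>\<^bsub>M\<^esub> \<oplus>\<^bsub>M\<^esub> \<ominus>\<^bsub>M\<^esub> \<zero>\<^bsub>M\<^esub> = \<zero>\<^bsub>M\<^esub>" by (rule M.r_neg) simp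
    moreover have "\<zero>\<^bsub>M\<^esub> \<oplus>\<^bsub>M\<^esub> \<ominus>\<^bsub>M\<^esub> \<zero>\<^bsub>M\<^esub> = \<ominus>\<^bsub>M\<^esub> \<zero>\<^bsub>M\<^esub>" by (rule M.l_zero) simp
    ultimately show ?thesis by simp
  qed
  show ?thesis using quot_zero[OF assms(1,2)] coset_eq_iff[OF assms(1,2) assms(3) M.zero_closed] assms(3)
    by (simp add: z)
qed

lemma quot_iso:
  assumes M: "module R M" and M': "module R M'"
    and B: "submod R M B" and B': "submod R M' B'"
    and Z: "Z \<subseteq> carrier M" "\<And>x y. x \<in> Z \<Longrightarrow> y \<in> Z \<Longrightarrow> x \<oplus>\<^bsub>M\<^esub> \<ominus>\<^bsub>M\<^esub> y \<in> Z"
    and Z': "Z' \<subseteq> carrier M'"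
    and phi: "\<phi> \<in> module_hom R M M'"
    and phiZ: "\<And>z. z \<in> Z \<Longrightarrow> \<phi> z \<in> Z'"
    and phiB: "\<And>b. b \<in> B \<Longrightarrow> \<phi> b \<in> B'"
    and inj: "\<And>z. z \<in> Z \<Longrightarrow> \<phi> z \<in> B' \<Longrightarrow> z \<in> B"
    and surj: "\<And>z'. z' \<in> Z' \<Longrightarrow> \<exists>z\<in>Z. \<phi> z \<oplus>\<^bsub>M'\<^esub> \<ominus>\<^bsub>M'\<^esub> z' \<in> B'"
  shows "module_isomorphic R (quot_module M Z B) (quot_module M' Z' B')"
proof -
  interpret M: module R M by fact
  interpret M': module R M' by fact
  interpret B: abelian_subgroup B M using submodD(6)[OF M B] .
  interpret B': abelian_subgroup B' M' using submodD(6)[OF M' B'] .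
  let ?Q = "quot_module M Z B" and ?Q' = "quot_module M' Z' B'"
  define h where "h X = (\<Union>w\<in>X. B' +>\<^bsub>M'\<^esub> \<phi> w)" for X
  have pc: "\<phi> x \<in> carrier M'" if "x \<in> carrier M" for x using module_hom_closed[OF phi that] .
  have K: "h (B +>\<^bsub>M\<^esub> z) = B' +>\<^bsub>M'\<^esub> \<phi> z" if z: "z \<in> carrier M" for z
  proof -
    have "B' +>\<^bsub>M'\<^esub> \<phi> w = B' +>\<^bsub>M'\<^esub> \<phi> z" if w: "w \<in> B +>\<^bsub>M\<^esub> z" for w
    proof -
      obtain b where b: "b \<in> B" "w = b \<oplus>\<^bsub>M\<^esub> z" using w unfolding a_r_coset_def' by blast
      have bc: "b \<in> carrier M" using b(1) submodD(1)[OF M B] by blast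
      have "\<phi> w = \<phi> b \<oplus>\<^bsub>M'\<^esub> \<phi> z" using b(2) module_hom_add[OF phi bc z] by simp
      moreover have "\<phi> b \<in> B'" using phiB b(1) by blast
      ultimately have "\<phi> w \<in> B' +>\<^bsub>M'\<^esub> \<phi> z" unfolding a_r_coset_def' by blast
      then show ?thesis using B'.a_repr_independence' pc[OF z] by metis
    qed
    moreover have "z \<in> B +>\<^bsub>M\<^esub> z" using B.a_rcos_self z by blast
    ultimately show ?thesis unfolding h_def by blast
  qed
  have carQ: "X \<in> carrier ?Q \<longleftrightarrow> (\<exists>z\<in>Z. X = B +>\<^bsub>M\<^esub> z)" for X
    unfolding quot_carrier by blast
  have carQ': "X \<in> carrier ?Q' \<longleftrightarrow> (\<exists>z\<in>Z'. X = B' +>\<^bsub>M'\<^esub> z)" for X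
    unfolding quot_carrier by blast
  have hom: "h \<in> module_hom R ?Q ?Q'"
    unfolding module_hom_def
  proof (intro CollectI conjI ballI)
    show "h \<in> carrier ?Q \<rightarrow> carrier ?Q'"
    proof
      fix X assume "X \<in> carrier ?Q"
      then obtain z where z: "z \<in> Z" "X = B +>\<^bsub>M\<^esub> z" unfolding carQ by blast
      have "h X = B' +>\<^bsub>M'\<^esub> \<phi> z" using K z Z(1) by blast
      then show "h X \<in> carrier ?Q'" unfolding carQ' using phiZ z(1) by blast
    qed
  next
    fix X Y assume "X \<in> carrier ?Q" "Y \<in> carrier ?Q"
    then obtain x y where xy: "x \<in> Z" "X = B +>\<^bsub>M\<^esub> x" "y \<in> Z" "Y = B +>\<^bsub>M\<^esub> y"
      unfolding carQ by meson
    have xc: "x \<in> carrier M" "y \<in> carrier M" using xy Z(1) by auto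
    have "h (X \<oplus>\<^bsub>?Q\<^esub> Y) = h (B +>\<^bsub>M\<^esub> (x \<oplus>\<^bsub>M\<^esub> y))"
      unfolding xy(2,4) quot_add[OF M B xc] ..
    also have "\<dots> = B' +>\<^bsub>M'\<^esub> (\<phi> x \<oplus>\<^bsub>M'\<^esub> \<phi> y)"
      using K[of "x \<oplus>\<^bsub>M\<^esub> y"] module_hom_add[OF phi xc] xc by simp
    also have "\<dots> = h X \<oplus>\<^bsub>?Q'\<^esub> h Y"
      unfolding xy(2,4) K[OF xc(1)] K[OF xc(2)] quot_add[OF M' B' pc[OF xc(1)] pc[OF xc(2)]] ..
    finally show "h (X \<oplus>\<^bsub>?Q\<^esub> Y) = h X \<oplus>\<^bsub>?Q'\<^esub> h Y" .
  next
    fix r X assume r: "r \<in> carrier R" and "X \<in> carrier ?Q"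
    then obtain x where xy: "x \<in> Z" "X = B +>\<^bsub>M\<^esub> x" unfolding carQ by meson
    have xc: "x \<in> carrier M" using xy Z(1) by auto
    have "h (r \<odot>\<^bsub>?Q\<^esub> X) = h (B +>\<^bsub>M\<^esub> (r \<odot>\<^bsub>M\<^esub> x))"
      unfolding xy(2) quot_smult[OF M B xc r] ..
    also have "\<dots> = B' +>\<^bsub>M'\<^esub> (r \<odot>\<^bsub>M'\<^esub> \<phi> x)"
      using K[of "r \<odot>\<^bsub>M\<^esub> x"] module_hom_smult[OF phi r xc] xc r by simp
    also have "\<dots> = r \<odot>\<^bsub>?Q'\<^esub> h X"
      unfolding xy(2) K[OF xc] quot_smult[OF M' B' pc[OF xc] r] ..
    finally show "h (r \<odot>\<^bsub>?Q\<^esub> X) = r \<odot>\<^bsub>?Q'\<^esub> h X" .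
  qed
  have injh: "inj_on h (carrier ?Q)"
  proof (rule inj_onI)
    fix X Y assume "X \<in> carrier ?Q" "Y \<in> carrier ?Q" and e: "h X = h Y"
    then obtain x y where xy: "x \<in> Z" "X = B +>\<^bsub>M\<^esub> x" "y \<in> Z" "Y = B +>\<^bsub>M\<^esub> y"
      unfolding carQ by meson
    have xc: "x \<in> carrier M" "y \<in> carrier M" using xy Z(1) by auto
    have "B' +>\<^bsub>M'\<^esub> \<phi> x = B' +>\<^bsub>M'\<^esub> \<phi> y" using e K xc xy by simp
    then have "\<phi> x \<oplus>\<^bsub>M'\<^esub> \<ominus>\<^bsub>M'\<^esub> \<phi> y \<in> B'"
      using coset_eq_iff[OF M' B' pc[OF xc(1)] pc[OF xc(2)]] by blast
    moreover have "\<phi> (x \<oplus>\<^bsub>M\<^esub> \<ominus>\<^bsub>M\<^esub> y) = \<phi> x \<oplus>\<^bsub>M'\<^esub> \<ominus>\<^bsub>M'\<^esub> \<phi> y"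
      using module_hom_add[OF phi xc(1) M.a_inv_closed[OF xc(2)]] module_hom_inv[OF M M' phi xc(2)] by simp
    ultimately have "x \<oplus>\<^bsub>M\<^esub> \<ominus>\<^bsub>M\<^esub> y \<in> B" using inj Z(2) xy by simp
    then show "X = Y" using coset_eq_iff[OF M B xc] xy by simp
  qed
  have surjh: "h ` carrier ?Q = carrier ?Q'"
  proof
    show "h ` carrier ?Q \<subseteq> carrier ?Q'" using hom unfolding module_hom_def by blast
  next
    show "carrier ?Q' \<subseteq> h ` carrier ?Q"
    proof
      fix Y assume "Y \<in> carrier ?Q'"
      then obtain y where y: "y \<in> Z'" "Y = B' +>\<^bsub>M'\<^esub> y" unfolding carQ' by blast
      obtain z where z: "z \<in> Z" "\<phi> z \<oplus>\<^bsub>M'\<^esub> \<ominus>\<^bsub>M'\<^esub> y \<in> B'" using surj y(1) by blast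
      have zc: "z \<in> carrier M" using z Z(1) by auto
      have "B' +>\<^bsub>M'\<^esub> \<phi> z = Y"
        using coset_eq_iff[OF M' B' pc[OF zc]] y z Z' by blast
      then have "h (B +>\<^bsub>M\<^esub> z) = Y" using K[OF zc] by simp
      moreover have "B +>\<^bsub>M\<^esub> z \<in> carrier ?Q" unfolding carQ using z by blast
      ultimately show "Y \<in> h ` carrier ?Q" by blast
    qed
  qed
  show ?thesis unfolding module_isomorphic_def bij_betw_def using hom injh surjh by blast
qed




definition presheaf :: "'r ring \<Rightarrow> 'a set \<Rightarrow> ('a set \<Rightarrow> ('r, 'm) module) \<Rightarrow> ('a set \<Rightarrow> 'a set \<Rightarrow> 'm \<Rightarrow> 'm) \<Rightarrow> bool" where
  "presheaf R S G g \<longleftrightarrow> cring R \<and> (\<forall>x. x \<subseteq> S \<longrightarrow> module R (G x)) \<and>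
     (\<forall>x y. x \<subseteq> y \<and> y \<subseteq> S \<longrightarrow> g y x \<in> module_hom R (G y) (G x))"

lemma chains_carrier_iff:
  "c \<in> carrier (cell_chains S G k) \<longleftrightarrow>
    (\<forall>x. x \<subseteq> S \<and> card x = k \<longrightarrow> c x \<in> carrier (G x)) \<and>
    (\<forall>x. \<not> (x \<subseteq> S \<and> card x = k) \<longrightarrow> c x = undefined)"
  unfolding cell_chains_def by simp

lemma chains_eqI:
  assumes "c \<in> carrier (cell_chains S G k)" "d \<in> carrier (cell_chains S G k)"
    "\<And>x. x \<subseteq> S \<Longrightarrow> card x = k \<Longrightarrow> c x = d x"
  shows "c = d"
proof
  fix x show "c x = d x" using assms unfolding chains_carrier_iff by metis
qed

lemma chains_add_apply:
  "x \<subseteq> S \<Longrightarrow> card x = k \<Longrightarrow> (c \<oplus>\<^bsub>cell_chains S G k\<^esub> d) x = c x \<oplus>\<^bsub>G x\<^esub> d x"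
  unfolding cell_chains_def by simp

lemma chains_smult_apply:
  "x \<subseteq> S \<Longrightarrow> card x = k \<Longrightarrow> (r \<odot>\<^bsub>cell_chains S G k\<^esub> c) x = r \<odot>\<^bsub>G x\<^esub> c x"
  unfolding cell_chains_def by simp

lemma chains_zero_apply:
  "x \<subseteq> S \<Longrightarrow> card x = k \<Longrightarrow> \<zero>\<^bsub>cell_chains S G k\<^esub> x = \<zero>\<^bsub>G x\<^esub>"
  unfolding cell_chains_def by simp

lemma chains_apply_carrier:
  "c \<in> carrier (cell_chains S G k) \<Longrightarrow> x \<subseteq> S \<Longrightarrow> card x = k \<Longrightarrow> c x \<in> carrier (G x)"
  unfolding chains_carrier_iff by blast

lemma chains_module:
  assumes R: "cring R" and modG: "\<And>x. x \<subseteq> S \<Longrightarrow> module R (G x)"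
  shows "module R (cell_chains S G k)" (is "module R ?C")
proof -
  let ?P = "\<lambda>x. x \<subseteq> S \<and> card x = k"
  have addc: "c \<oplus>\<^bsub>?C\<^esub> d \<in> carrier ?C" if "c \<in> carrier ?C" "d \<in> carrier ?C" for c d
  proof -
    have "c x \<oplus>\<^bsub>G x\<^esub> d x \<in> carrier (G x)" if "x \<subseteq> S" "card x = k" for x
      using module.axioms(2)[OF modG[OF that(1)]] chains_apply_carrier[OF \<open>c \<in> carrier ?C\<close> that]
        chains_apply_carrier[OF \<open>d \<in> carrier ?C\<close> that] abelian_monoid.a_closed abelian_group.axioms(1) by metis
    then show ?thesis unfolding chains_carrier_iff by (simp add: cell_chains_def)
  qed
  have zc: "\<zero>\<^bsub>?C\<^esub> \<in> carrier ?C"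
  proof -
    have "\<zero>\<^bsub>G x\<^esub> \<in> carrier (G x)" if "x \<subseteq> S" for x
      using module.axioms(2)[OF modG[OF that]] abelian_monoid.zero_closed abelian_group.axioms(1) by metis
    then show ?thesis unfolding chains_carrier_iff by (simp add: cell_chains_def)
  qed
  have smc: "r \<odot>\<^bsub>?C\<^esub> c \<in> carrier ?C" if "r \<in> carrier R" "c \<in> carrier ?C" for r c
  proof -
    have "r \<odot>\<^bsub>G x\<^esub> c x \<in> carrier (G x)" if "x \<subseteq> S" "card x = k" for x
      using module.smult_closed[OF modG[OF that(1)]] \<open>r \<in> carrier R\<close> chains_apply_carrier[OF \<open>c \<in> carrier ?C\<close> that]
      by blast
    then show ?thesis unfolding chains_carrier_iff by (simp add: cell_chains_def)
  qed
  have ag: "abelian_group ?C"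
  proof (rule abelian_groupI)
    fix c d assume c: "c \<in> carrier ?C" and d: "d \<in> carrier ?C"
    show "c \<oplus>\<^bsub>?C\<^esub> d \<in> carrier ?C" using addc c d .
    show "c \<oplus>\<^bsub>?C\<^esub> d = d \<oplus>\<^bsub>?C\<^esub> c"
    proof (rule chains_eqI[OF addc[OF c d] addc[OF d c]])
      fix x assume x: "x \<subseteq> S" "card x = k"
      interpret Gx: module R "G x" using modG x by blast
      show "(c \<oplus>\<^bsub>?C\<^esub> d) x = (d \<oplus>\<^bsub>?C\<^esub> c) x"
        unfolding chains_add_apply[OF x] using Gx.a_comm chains_apply_carrier[OF c x] chains_apply_carrier[OF d x] by simp
    qed
  next
    show "\<zero>\<^bsub>?C\<^esub> \<in> carrier ?C" by (rule zc)
  next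
    fix c d e assume c: "c \<in> carrier ?C" and d: "d \<in> carrier ?C" and e: "e \<in> carrier ?C"
    show "c \<oplus>\<^bsub>?C\<^esub> d \<oplus>\<^bsub>?C\<^esub> e = c \<oplus>\<^bsub>?C\<^esub> (d \<oplus>\<^bsub>?C\<^esub> e)"
    proof (rule chains_eqI[OF addc[OF addc[OF c d] e] addc[OF c addc[OF d e]]])
      fix x assume x: "x \<subseteq> S" "card x = k"
      interpret Gx: module R "G x" using modG x by blast
      show "(c \<oplus>\<^bsub>?C\<^esub> d \<oplus>\<^bsub>?C\<^esub> e) x = (c \<oplus>\<^bsub>?C\<^esub> (d \<oplus>\<^bsub>?C\<^esub> e)) x"
        unfolding chains_add_apply[OF x] using Gx.a_assoc chains_apply_carrier[OF c x]
          chains_apply_carrier[OF d x] chains_apply_carrier[OF e x] by simp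
    qed
  next
    fix c assume c: "c \<in> carrier ?C"
    show "\<zero>\<^bsub>?C\<^esub> \<oplus>\<^bsub>?C\<^esub> c = c"
    proof (rule chains_eqI[OF addc[OF zc c] c])
      fix x assume x: "x \<subseteq> S" "card x = k"
      interpret Gx: module R "G x" using modG x by blast
      show "(\<zero>\<^bsub>?C\<^esub> \<oplus>\<^bsub>?C\<^esub> c) x = c x"
        unfolding chains_add_apply[OF x] chains_zero_apply[OF x] using chains_apply_carrier[OF c x] by simp
    qed
    define nc where "nc = (\<lambda>x. if x \<subseteq> S \<and> card x = k then \<ominus>\<^bsub>G x\<^esub> c x else undefined)"
    have ncc: "nc \<in> carrier ?C"
    proof -
      have "\<ominus>\<^bsub>G x\<^esub> c x \<in> carrier (G x)" if "x \<subseteq> S" "card x = k" for x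
      proof -
        interpret Gx: module R "G x" using modG that by blast
        show ?thesis using chains_apply_carrier[OF c that] by simp
      qed
      then show ?thesis unfolding chains_carrier_iff nc_def by simp
    qed
    have "nc \<oplus>\<^bsub>?C\<^esub> c = \<zero>\<^bsub>?C\<^esub>"
    proof (rule chains_eqI[OF addc[OF ncc c] zc])
      fix x assume x: "x \<subseteq> S" "card x = k"
      interpret Gx: module R "G x" using modG x by blast
      show "(nc \<oplus>\<^bsub>?C\<^esub> c) x = \<zero>\<^bsub>?C\<^esub> x"
        unfolding chains_add_apply[OF x] chains_zero_apply[OF x] nc_def using chains_apply_carrier[OF c x] x
        by (simp add: Gx.l_neg)
    qed
    then show "\<exists>y\<in>carrier ?C. y \<oplus>\<^bsub>?C\<^esub> c = \<zero>\<^bsub>?C\<^esub>" using ncc by blast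
  qed
  show ?thesis
  proof (rule moduleI[OF R ag])
    fix r c assume "r \<in> carrier R" "c \<in> carrier ?C"
    then show "r \<odot>\<^bsub>?C\<^esub> c \<in> carrier ?C" by (rule smc)
  next
    fix r s c assume r: "r \<in> carrier R" and s: "s \<in> carrier R" and c: "c \<in> carrier ?C"
    have rs: "r \<oplus>\<^bsub>R\<^esub> s \<in> carrier R" "r \<otimes>\<^bsub>R\<^esub> s \<in> carrier R"
      using r s R cring.cring_simprules by metis+
    show "(r \<oplus>\<^bsub>R\<^esub> s) \<odot>\<^bsub>?C\<^esub> c = r \<odot>\<^bsub>?C\<^esub> c \<oplus>\<^bsub>?C\<^esub> s \<odot>\<^bsub>?C\<^esub> c"
    proof (rule chains_eqI[OF smc[OF rs(1) c] addc[OF smc[OF r c] smc[OF s c]]])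
      fix x assume x: "x \<subseteq> S" "card x = k"
      interpret Gx: module R "G x" using modG x by blast
      show "((r \<oplus>\<^bsub>R\<^esub> s) \<odot>\<^bsub>?C\<^esub> c) x = (r \<odot>\<^bsub>?C\<^esub> c \<oplus>\<^bsub>?C\<^esub> s \<odot>\<^bsub>?C\<^esub> c) x"
        unfolding chains_add_apply[OF x] chains_smult_apply[OF x]
        using Gx.smult_l_distr r s chains_apply_carrier[OF c x] by simp
    qed
    show "(r \<otimes>\<^bsub>R\<^esub> s) \<odot>\<^bsub>?C\<^esub> c = r \<odot>\<^bsub>?C\<^esub> (s \<odot>\<^bsub>?C\<^esub> c)"
    proof (rule chains_eqI[OF smc[OF rs(2) c] smc[OF r smc[OF s c]]])
      fix x assume x: "x \<subseteq> S" "card x = k"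
      interpret Gx: module R "G x" using modG x by blast
      show "((r \<otimes>\<^bsub>R\<^esub> s) \<odot>\<^bsub>?C\<^esub> c) x = (r \<odot>\<^bsub>?C\<^esub> (s \<odot>\<^bsub>?C\<^esub> c)) x"
        unfolding chains_smult_apply[OF x]
        using Gx.smult_assoc1 r s chains_apply_carrier[OF c x] by simp
    qed
  next
    fix r c d assume r: "r \<in> carrier R" and c: "c \<in> carrier ?C" and d: "d \<in> carrier ?C"
    show "r \<odot>\<^bsub>?C\<^esub> (c \<oplus>\<^bsub>?C\<^esub> d) = r \<odot>\<^bsub>?C\<^esub> c \<oplus>\<^bsub>?C\<^esub> r \<odot>\<^bsub>?C\<^esub> d"
    proof (rule chains_eqI[OF smc[OF r addc[OF c d]] addc[OF smc[OF r c] smc[OF r d]]])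
      fix x assume x: "x \<subseteq> S" "card x = k"
      interpret Gx: module R "G x" using modG x by blast
      show "(r \<odot>\<^bsub>?C\<^esub> (c \<oplus>\<^bsub>?C\<^esub> d)) x = (r \<odot>\<^bsub>?C\<^esub> c \<oplus>\<^bsub>?C\<^esub> r \<odot>\<^bsub>?C\<^esub> d) x"
        unfolding chains_add_apply[OF x] chains_smult_apply[OF x]
        using Gx.smult_r_distr r chains_apply_carrier[OF c x] chains_apply_carrier[OF d x] by simp
    qed
  next
    fix c assume c: "c \<in> carrier ?C"
    show "\<one>\<^bsub>R\<^esub> \<odot>\<^bsub>?C\<^esub> c = c"
    proof (rule chains_eqI[OF smc[OF _ c] c])
      show "\<one>\<^bsub>R\<^esub> \<in> carrier R" using R cring.cring_simprules by metis
      fix x assume x: "x \<subseteq> S" "card x = k"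
      interpret Gx: module R "G x" using modG x by blast
      show "(\<one>\<^bsub>R\<^esub> \<odot>\<^bsub>?C\<^esub> c) x = c x"
        unfolding chains_smult_apply[OF x] using chains_apply_carrier[OF c x] by simp
    qed
  qed
qed

definition dterm :: "'r ring \<Rightarrow> ('a::linorder set \<Rightarrow> ('r, 'm) module) \<Rightarrow> ('a set \<Rightarrow> 'a set \<Rightarrow> 'm \<Rightarrow> 'm)
    \<Rightarrow> ('a set \<Rightarrow> 'm) \<Rightarrow> 'a set \<Rightarrow> 'a \<Rightarrow> 'm" where
  "dterm R G g c y b = ((\<ominus>\<^bsub>R\<^esub> \<one>\<^bsub>R\<^esub>) [^]\<^bsub>R\<^esub> card {b' \<in> insert b y. b' < b})
                    \<odot>\<^bsub>G y\<^esub> g (insert b y) y (c (insert b y))"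

lemma diff_apply:
  "y \<subseteq> S \<Longrightarrow> card y = k \<Longrightarrow> cell_diff R S G g k c y = finsum (G y) (dterm R G g c y) (S - y)"
  unfolding cell_diff_def dterm_def by simp

lemma diff_undef:
  "\<not> (y \<subseteq> S \<and> card y = k) \<Longrightarrow> cell_diff R S G g k c y = undefined"
  unfolding cell_diff_def by auto

locale psh =
  fixes R :: "'r ring" and S :: "'a::linorder set" and G :: "'a set \<Rightarrow> ('r, 'm) module"
    and g :: "'a set \<Rightarrow> 'a set \<Rightarrow> 'm \<Rightarrow> 'm"
  assumes ps: "presheaf R S G g" and fin: "finite S"
begin

lemma cr: "cring R" using ps unfolding presheaf_def by blast
lemma modG: "x \<subseteq> S \<Longrightarrow> module R (G x)" using ps unfolding presheaf_def by blast
lemma homg: "x \<subseteq> y \<Longrightarrow> y \<subseteq> S \<Longrightarrow> g y x \<in> module_hom R (G y) (G x)"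
  using ps unfolding presheaf_def by blast

lemma modC: "module R (cell_chains S G k)"
  using chains_module[OF cr modG] .

lemma sg_closed: "(\<ominus>\<^bsub>R\<^esub> \<one>\<^bsub>R\<^esub>) [^]\<^bsub>R\<^esub> (n::nat) \<in> carrier R"
proof -
  interpret R: cring R by (rule cr)
  show ?thesis by simp
qed

lemma ins:
  assumes "y \<subseteq> S" "card y = k" "b \<in> S - y"
  shows "insert b y \<subseteq> S" "card (insert b y) = Suc k"
proof -
  show "insert b y \<subseteq> S" using assms by blast
  have "finite y" using assms(1) fin finite_subset by blast
  then show "card (insert b y) = Suc k" using assms by simp
qed

lemma dterm_closed:
  assumes c: "c \<in> carrier (cell_chains S G (Suc k))" and y: "y \<subseteq> S" "card y = k" and b: "b \<in> S - y"
  shows "dterm R G g c y b \<in> carrier (G y)"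
proof -
  interpret Gy: module R "G y" using modG y by blast
  have "c (insert b y) \<in> carrier (G (insert b y))" using chains_apply_carrier[OF c ins[OF y b]] .
  then have "g (insert b y) y (c (insert b y)) \<in> carrier (G y)"
    using module_hom_closed[OF homg[OF _ ins(1)[OF y b]]] by blast
  then show ?thesis unfolding dterm_def using sg_closed by simp
qed

lemma dterm_Pi:
  assumes c: "c \<in> carrier (cell_chains S G (Suc k))" and y: "y \<subseteq> S" "card y = k"
  shows "dterm R G g c y \<in> S - y \<rightarrow> carrier (G y)"
  using dterm_closed[OF c y] by blast

lemma diff_closed:
  assumes c: "c \<in> carrier (cell_chains S G (Suc k))"
  shows "cell_diff R S G g k c \<in> carrier (cell_chains S G k)"
proof -
  have "cell_diff R S G g k c y \<in> carrier (G y)" if y: "y \<subseteq> S" "card y = k" for y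
  proof -
    interpret Gy: module R "G y" using modG y by blast
    show ?thesis unfolding diff_apply[OF y] using Gy.finsum_closed[OF dterm_Pi[OF c y]] .
  qed
  then show ?thesis unfolding chains_carrier_iff using diff_undef by metis
qed

lemma diff_hom:
  "cell_diff R S G g k \<in> module_hom R (cell_chains S G (Suc k)) (cell_chains S G k)"
  unfolding module_hom_def
proof (intro CollectI conjI ballI)
  interpret R: cring R by (rule cr)
  show "cell_diff R S G g k \<in> carrier (cell_chains S G (Suc k)) \<rightarrow> carrier (cell_chains S G k)"
    using diff_closed by blast
  interpret C1: module R "cell_chains S G (Suc k)" by (rule modC)
  fix c d assume c: "c \<in> carrier (cell_chains S G (Suc k))" and d: "d \<in> carrier (cell_chains S G (Suc k))"
  show "cell_diff R S G g k (c \<oplus>\<^bsub>cell_chains S G (Suc k)\<^esub> d) =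
        cell_diff R S G g k c \<oplus>\<^bsub>cell_chains S G k\<^esub> cell_diff R S G g k d"
  proof (rule chains_eqI)
    show "cell_diff R S G g k (c \<oplus>\<^bsub>cell_chains S G (Suc k)\<^esub> d) \<in> carrier (cell_chains S G k)"
      by (rule diff_closed) (use c d in simp)
    show "cell_diff R S G g k c \<oplus>\<^bsub>cell_chains S G k\<^esub> cell_diff R S G g k d \<in> carrier (cell_chains S G k)"
      using module.axioms(2)[OF modC] diff_closed[OF c] diff_closed[OF d]
      by (meson abelian_group.axioms(1) abelian_monoid.a_closed)
    fix y assume y: "y \<subseteq> S" "card y = k"
    interpret Gy: module R "G y" using modG y by blast
    have "dterm R G g (c \<oplus>\<^bsub>cell_chains S G (Suc k)\<^esub> d) y b = dterm R G g c y b \<oplus>\<^bsub>G y\<^esub> dterm R G g d y b"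
      if b: "b \<in> S - y" for b
    proof -
      note i = ins[OF y b]
      have h: "g (insert b y) y \<in> module_hom R (G (insert b y)) (G y)" using homg[OF _ i(1)] by blast
      have cc: "c (insert b y) \<in> carrier (G (insert b y))" "d (insert b y) \<in> carrier (G (insert b y))"
        using chains_apply_carrier[OF c i] chains_apply_carrier[OF d i] by auto
      show ?thesis unfolding dterm_def chains_add_apply[OF i] module_hom_add[OF h cc]
        using Gy.smult_r_distr[OF sg_closed] module_hom_closed[OF h] cc by simp
    qed
    then show "cell_diff R S G g k (c \<oplus>\<^bsub>cell_chains S G (Suc k)\<^esub> d) y =
        (cell_diff R S G g k c \<oplus>\<^bsub>cell_chains S G k\<^esub> cell_diff R S G g k d) y"
      unfolding chains_add_apply[OF y] diff_apply[OF y]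
      using Gy.finsum_addf[OF dterm_Pi[OF c y] dterm_Pi[OF d y]] Gy.finsum_cong'[OF refl]
        Gy.add.m_closed dterm_closed[OF c y] dterm_closed[OF d y]
      by (smt (verit) Pi_I)
  qed
next
  interpret R: cring R by (rule cr)
  interpret C1: module R "cell_chains S G (Suc k)" by (rule modC)
  fix r c assume r: "r \<in> carrier R" and c: "c \<in> carrier (cell_chains S G (Suc k))"
  show "cell_diff R S G g k (r \<odot>\<^bsub>cell_chains S G (Suc k)\<^esub> c) = r \<odot>\<^bsub>cell_chains S G k\<^esub> cell_diff R S G g k c"
  proof (rule chains_eqI)
    show "cell_diff R S G g k (r \<odot>\<^bsub>cell_chains S G (Suc k)\<^esub> c) \<in> carrier (cell_chains S G k)"
      by (rule diff_closed) (use c r in simp)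
    show "r \<odot>\<^bsub>cell_chains S G k\<^esub> cell_diff R S G g k c \<in> carrier (cell_chains S G k)"
      using module.smult_closed[OF modC r diff_closed[OF c]] .
    fix y assume y: "y \<subseteq> S" "card y = k"
    interpret Gy: module R "G y" using modG y by blast
    have "dterm R G g (r \<odot>\<^bsub>cell_chains S G (Suc k)\<^esub> c) y b = r \<odot>\<^bsub>G y\<^esub> dterm R G g c y b"
      if b: "b \<in> S - y" for b
    proof -
      note i = ins[OF y b]
      have h: "g (insert b y) y \<in> module_hom R (G (insert b y)) (G y)" using homg[OF _ i(1)] by blast
      have cc: "c (insert b y) \<in> carrier (G (insert b y))"
        using chains_apply_carrier[OF c i] by auto
      have gc: "g (insert b y) y (c (insert b y)) \<in> carrier (G y)" using module_hom_closed[OF h cc] .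
      let ?e = "(\<ominus>\<^bsub>R\<^esub> \<one>\<^bsub>R\<^esub>) [^]\<^bsub>R\<^esub> card {b' \<in> insert b y. b' < b}"
      have "?e \<odot>\<^bsub>G y\<^esub> (r \<odot>\<^bsub>G y\<^esub> g (insert b y) y (c (insert b y))) = (?e \<otimes>\<^bsub>R\<^esub> r) \<odot>\<^bsub>G y\<^esub> g (insert b y) y (c (insert b y))"
        using Gy.smult_assoc1[OF sg_closed r gc] by simp
      also have "\<dots> = (r \<otimes>\<^bsub>R\<^esub> ?e) \<odot>\<^bsub>G y\<^esub> g (insert b y) y (c (insert b y))"
        using R.m_comm[OF sg_closed r] by simp
      also have "\<dots> = r \<odot>\<^bsub>G y\<^esub> (?e \<odot>\<^bsub>G y\<^esub> g (insert b y) y (c (insert b y)))"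
        using Gy.smult_assoc1[OF r sg_closed gc] by simp
      finally show ?thesis unfolding dterm_def chains_smult_apply[OF i] module_hom_smult[OF h r cc] .
    qed
    then show "cell_diff R S G g k (r \<odot>\<^bsub>cell_chains S G (Suc k)\<^esub> c) y =
        (r \<odot>\<^bsub>cell_chains S G k\<^esub> cell_diff R S G g k c) y"
      unfolding chains_smult_apply[OF y] diff_apply[OF y]
      using Gy.finsum_smult_ldistr[OF _ r dterm_Pi[OF c y]] Gy.finsum_cong'[OF refl]
        dterm_closed[OF c y] fin r
      by (smt (verit) Gy.smult_closed Pi_I finite_Diff)
  qed
qed

end

lemma antisym_double_sum:
  assumes M: "abelian_group M" and fD: "finite D"
    and T: "\<And>b b'. b \<in> D \<Longrightarrow> b' \<in> D \<Longrightarrow> b \<noteq> b' \<Longrightarrow> T b b' \<in> carrier M"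
    and anti: "\<And>b b'. b \<in> D \<Longrightarrow> b' \<in> D \<Longrightarrow> b \<noteq> b' \<Longrightarrow> T b b' = \<ominus>\<^bsub>M\<^esub> T b' b"
  shows "finsum M (\<lambda>b. finsum M (T b) (D - {b})) D = \<zero>\<^bsub>M\<^esub>"
  using fD T anti
proof (induction D rule: finite_induct)
  case empty
  interpret M: abelian_group M by (rule M)
  show ?case by simp
next
  case (insert x D)
  interpret M: abelian_group M by (rule M)
  have Tc: "\<And>b b'. b \<in> insert x D \<Longrightarrow> b' \<in> insert x D \<Longrightarrow> b \<noteq> b' \<Longrightarrow> T b b' \<in> carrier M" by fact
  have an: "\<And>b b'. b \<in> insert x D \<Longrightarrow> b' \<in> insert x D \<Longrightarrow> b \<noteq> b' \<Longrightarrow> T b b' = \<ominus>\<^bsub>M\<^esub> T b' b" by fact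
  have IH: "finsum M (\<lambda>b. finsum M (T b) (D - {b})) D = \<zero>\<^bsub>M\<^esub>"
    using insert.IH Tc an by blast
  have P2: "finsum M (T b) (insert x D - {b}) \<in> carrier M" if "b \<in> insert x D" for b
    by (rule M.finsum_closed, rule Pi_I, rule Tc) (use that in auto)
  have P3: "(\<lambda>b. finsum M (T b) (insert x D - {b})) \<in> D \<rightarrow> carrier M" using P2 by blast
  have e1: "finsum M (\<lambda>b. finsum M (T b) (insert x D - {b})) (insert x D)
      = finsum M (T x) (insert x D - {x}) \<oplus>\<^bsub>M\<^esub> finsum M (\<lambda>b. finsum M (T b) (insert x D - {b})) D"
    using M.finsum_insert[OF insert.hyps P3 P2[of x]] by simp
  have e2: "insert x D - {x} = D" using insert.hyps by blast
  have e3: "finsum M (T b) (insert x D - {b}) = T b x \<oplus>\<^bsub>M\<^esub> finsum M (T b) (D - {b})" if b: "b \<in> D" for b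
  proof -
    have "insert x D - {b} = insert x (D - {b})" using b insert.hyps by blast
    moreover have "finsum M (T b) (insert x (D - {b})) = T b x \<oplus>\<^bsub>M\<^esub> finsum M (T b) (D - {b})"
      by (rule M.finsum_insert) (use insert.hyps b Tc in auto)
    ultimately show ?thesis by simp
  qed
  have P4: "finsum M (T b) (D - {b}) \<in> carrier M" if "b \<in> D" for b
    by (rule M.finsum_closed, rule Pi_I, rule Tc) (use that in auto)
  have P5: "T b x \<in> carrier M" if "b \<in> D" for b
    by (rule Tc) (use that insert.hyps in auto)
  have P6: "T x b \<in> carrier M" if "b \<in> D" for b
    by (rule Tc) (use that insert.hyps in auto)
  have e4: "finsum M (\<lambda>b. finsum M (T b) (insert x D - {b})) D
      = finsum M (\<lambda>b. T b x \<oplus>\<^bsub>M\<^esub> finsum M (T b) (D - {b})) D"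
  proof (rule M.finsum_cong'[OF refl])
    show "(\<lambda>b. T b x \<oplus>\<^bsub>M\<^esub> finsum M (T b) (D - {b})) \<in> D \<rightarrow> carrier M"
      using P4 P5 by simp
  qed (rule e3)
  also have "\<dots> = finsum M (\<lambda>b. T b x) D \<oplus>\<^bsub>M\<^esub> finsum M (\<lambda>b. finsum M (T b) (D - {b})) D"
    by (rule M.finsum_addf) (use P4 P5 in auto)
  also have "\<dots> = finsum M (\<lambda>b. T b x) D"
    unfolding IH by (rule M.r_zero, rule M.finsum_closed) (use P5 in blast)
  finally have e5: "finsum M (\<lambda>b. finsum M (T b) (insert x D - {b})) D = finsum M (\<lambda>b. T b x) D" .
  have "finsum M (T x) D \<oplus>\<^bsub>M\<^esub> finsum M (\<lambda>b. T b x) D = finsum M (\<lambda>b. T x b \<oplus>\<^bsub>M\<^esub> T b x) D"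
    by (rule M.finsum_addf[symmetric]) (use P5 P6 in auto)
  also have "\<dots> = finsum M (\<lambda>b. \<zero>\<^bsub>M\<^esub>) D"
  proof (rule M.finsum_cong')
    fix b assume b: "b \<in> D"
    then have "b \<noteq> x" using insert.hyps by blast
    then have "T x b = \<ominus>\<^bsub>M\<^esub> T b x" using an b by blast
    then show "T x b \<oplus>\<^bsub>M\<^esub> T b x = \<zero>\<^bsub>M\<^esub>" using M.l_neg P5 b by simp
  qed auto
  also have "\<dots> = \<zero>\<^bsub>M\<^esub>" by simp
  finally show ?case using e1 e2 e5 by simp
qed

lemma card_less_insert2:
  fixes b b' :: "'a::linorder"
  assumes "finite v" "b \<notin> v" "b' \<notin> v" "b \<noteq> b'"
  shows "card {x \<in> insert b' (insert b v). x < b'} = card {x \<in> insert b' v. x < b'} + (if b < b' then 1 else 0)"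
proof (cases "b < b'")
  case True
  have "{x \<in> insert b' (insert b v). x < b'} = insert b {x \<in> insert b' v. x < b'}" using True by auto
  moreover have "b \<notin> {x \<in> insert b' v. x < b'}" using assms by auto
  moreover have "finite {x \<in> insert b' v. x < b'}" using assms by auto
  ultimately show ?thesis using True by simp
next
  case False
  have "{x \<in> insert b' (insert b v). x < b'} = {x \<in> insert b' v. x < b'}" using False by auto
  then show ?thesis using False by simp
qed

lemma sign_swap:
  fixes b b' :: "'a::linorder"
  assumes R: "cring R" and "finite v" "b \<notin> v" "b' \<notin> v" "b \<noteq> b'"
  shows "(\<ominus>\<^bsub>R\<^esub> \<one>\<^bsub>R\<^esub>) [^]\<^bsub>R\<^esub> card {x \<in> insert b v. x < b} \<otimes>\<^bsub>R\<^esub> (\<ominus>\<^bsub>R\<^esub> \<one>\<^bsub>R\<^esub>) [^]\<^bsub>R\<^esub> card {x \<in> insert b' (insert b v). x < b'}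
    = \<ominus>\<^bsub>R\<^esub> ((\<ominus>\<^bsub>R\<^esub> \<one>\<^bsub>R\<^esub>) [^]\<^bsub>R\<^esub> card {x \<in> insert b' v. x < b'} \<otimes>\<^bsub>R\<^esub> (\<ominus>\<^bsub>R\<^esub> \<one>\<^bsub>R\<^esub>) [^]\<^bsub>R\<^esub> card {x \<in> insert b (insert b' v). x < b})"
proof -
  interpret R: cring R by (rule R)
  let ?e = "\<lambda>n::nat. (\<ominus>\<^bsub>R\<^esub> \<one>\<^bsub>R\<^esub>) [^]\<^bsub>R\<^esub> n"
  define n1 where "n1 = card {x \<in> insert b v. x < b}"
  define n2 where "n2 = card {x \<in> insert b' v. x < b'}"
  have c1: "card {x \<in> insert b' (insert b v). x < b'} = n2 + (if b < b' then 1 else 0)"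
    unfolding n2_def by (rule card_less_insert2) (use assms in auto)
  have c2: "card {x \<in> insert b (insert b' v). x < b} = n1 + (if b' < b then 1 else 0)"
    unfolding n1_def by (rule card_less_insert2) (use assms in auto)
  have ec: "?e n \<in> carrier R" for n by simp
  have emul: "?e m \<otimes>\<^bsub>R\<^esub> ?e n = ?e (m + n)" for m n by (simp add: R.nat_pow_mult)
  have esuc: "?e (Suc n) = \<ominus>\<^bsub>R\<^esub> ?e n" for n
    using R.r_minus[OF ec R.one_closed] by simp
  show ?thesis
  proof (cases "b < b'")
    case True
    then have "\<not> b' < b" by simp
    then have c1': "card {x \<in> insert b' (insert b v). x < b'} = Suc n2"
      and c2': "card {x \<in> insert b (insert b' v). x < b} = n1" using True c1 c2 by simp_all
    have "?e n1 \<otimes>\<^bsub>R\<^esub> ?e (Suc n2) = ?e (Suc (n1 + n2))" unfolding emul by simp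
    also have "\<dots> = \<ominus>\<^bsub>R\<^esub> ?e (n1 + n2)" by (rule esuc)
    also have "\<dots> = \<ominus>\<^bsub>R\<^esub> (?e n2 \<otimes>\<^bsub>R\<^esub> ?e n1)" unfolding emul by (simp add: add.commute)
    finally show ?thesis unfolding c1' c2' n1_def[symmetric] n2_def[symmetric] .
  next
    case False
    then have "b' < b" using assms(5) by simp
    then have c1': "card {x \<in> insert b' (insert b v). x < b'} = n2"
      and c2': "card {x \<in> insert b (insert b' v). x < b} = Suc n1" using False c1 c2 by simp_all
    have "?e n1 \<otimes>\<^bsub>R\<^esub> ?e n2 = ?e (n1 + n2)" unfolding emul ..
    also have "\<dots> = \<ominus>\<^bsub>R\<^esub> (\<ominus>\<^bsub>R\<^esub> ?e (n1 + n2))" using ec by simp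
    also have "\<dots> = \<ominus>\<^bsub>R\<^esub> ?e (Suc (n1 + n2))" unfolding esuc ..
    also have "\<dots> = \<ominus>\<^bsub>R\<^esub> (?e n2 \<otimes>\<^bsub>R\<^esub> ?e (Suc n1))" unfolding emul by (simp add: add.commute)
    finally show ?thesis unfolding c1' c2' n1_def[symmetric] n2_def[symmetric] .
  qed
qed

locale sh = psh +
  assumes funct: "\<And>x y z v. x \<subseteq> y \<Longrightarrow> y \<subseteq> z \<Longrightarrow> z \<subseteq> S \<Longrightarrow> v \<in> carrier (G z) \<Longrightarrow> g y x (g z y v) = g z x v"
begin

lemma dd0:
  assumes c: "c \<in> carrier (cell_chains S G (Suc (Suc k)))"
  shows "cell_diff R S G g k (cell_diff R S G g (Suc k) c) = \<zero>\<^bsub>cell_chains S G k\<^esub>"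
proof (rule chains_eqI)
  interpret R: cring R by (rule cr)
  show "cell_diff R S G g k (cell_diff R S G g (Suc k) c) \<in> carrier (cell_chains S G k)"
    by (rule diff_closed, rule diff_closed, rule c)
  show "\<zero>\<^bsub>cell_chains S G k\<^esub> \<in> carrier (cell_chains S G k)" using module.axioms(2)[OF modC]
    by (meson abelian_group.axioms(1) abelian_monoid.zero_closed)
  fix v assume v: "v \<subseteq> S" "card v = k"
  interpret Gv: module R "G v" using modG v by blast
  have fv: "finite v" using v fin finite_subset by blast
  let ?e = "\<lambda>n::nat. (\<ominus>\<^bsub>R\<^esub> \<one>\<^bsub>R\<^esub>) [^]\<^bsub>R\<^esub> n"
  define T where "T b b' = (?e (card {x \<in> insert b v. x < b}) \<otimes>\<^bsub>R\<^esub> ?e (card {x \<in> insert b' (insert b v). x < b'}))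
      \<odot>\<^bsub>G v\<^esub> g (insert b' (insert b v)) v (c (insert b' (insert b v)))" for b b'
  have Wc: "g (insert b' (insert b v)) v (c (insert b' (insert b v))) \<in> carrier (G v)"
    if "b \<in> S - v" "b' \<in> S - v" "b \<noteq> b'" for b b'
  proof -
    have i1: "insert b v \<subseteq> S" "card (insert b v) = Suc k" using ins[OF v that(1)] by auto
    have "b' \<in> S - insert b v" using that by blast
    note i2 = ins[OF i1 this]
    have "c (insert b' (insert b v)) \<in> carrier (G (insert b' (insert b v)))"
      using chains_apply_carrier[OF c i2] .
    then show ?thesis using module_hom_closed[OF homg[OF _ i2(1)]] by blast
  qed
  have Tc: "T b b' \<in> carrier (G v)" if "b \<in> S - v" "b' \<in> S - v" "b \<noteq> b'" for b b'
    unfolding T_def using Wc[OF that] by simp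
  have Ta: "T b b' = \<ominus>\<^bsub>G v\<^esub> T b' b" if "b \<in> S - v" "b' \<in> S - v" "b \<noteq> b'" for b b'
  proof -
    have sw: "?e (card {x \<in> insert b v. x < b}) \<otimes>\<^bsub>R\<^esub> ?e (card {x \<in> insert b' (insert b v). x < b'})
      = \<ominus>\<^bsub>R\<^esub> (?e (card {x \<in> insert b' v. x < b'}) \<otimes>\<^bsub>R\<^esub> ?e (card {x \<in> insert b (insert b' v). x < b}))"
      by (rule sign_swap[OF cr fv]) (use that in auto)
    have ic: "insert b (insert b' v) = insert b' (insert b v)" by blast
    show ?thesis unfolding T_def sw ic
      by (rule Gv.smult_l_minus) (use Wc[OF that] in auto)
  qed
  have inner: "dterm R G g (cell_diff R S G g (Suc k) c) v b = finsum (G v) (T b) ((S - v) - {b})"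
    if b: "b \<in> S - v" for b
  proof -
    note i1 = ins[OF v b]
    let ?y = "insert b v"
    interpret Gy: module R "G ?y" using modG i1(1) by blast
    have hy: "g ?y v \<in> module_hom R (G ?y) (G v)" using homg[OF _ i1(1)] by blast
    have Sy: "S - ?y = (S - v) - {b}" by blast
    have fS: "finite (S - ?y)" using fin by simp
    let ?e1 = "?e (card {x \<in> insert b v. x < b})"
    have e1c: "?e1 \<in> carrier R" by simp
    have b'i: "b' \<in> S - ?y \<Longrightarrow> b \<in> S - v \<and> b' \<in> S - v \<and> b \<noteq> b'" for b' using b by blast
    have "dterm R G g (cell_diff R S G g (Suc k) c) v b
        = ?e1 \<odot>\<^bsub>G v\<^esub> g ?y v (finsum (G ?y) (dterm R G g c ?y) (S - ?y))"
      unfolding dterm_def diff_apply[OF i1] ..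
    also have "\<dots> = ?e1 \<odot>\<^bsub>G v\<^esub> finsum (G v) (\<lambda>b'. g ?y v (dterm R G g c ?y b')) (S - ?y)"
      using module_hom_finsum[OF modG[OF i1(1)] modG[OF v(1)] hy fS dterm_Pi[OF c i1]] by simp
    also have "\<dots> = finsum (G v) (\<lambda>b'. ?e1 \<odot>\<^bsub>G v\<^esub> g ?y v (dterm R G g c ?y b')) (S - ?y)"
      by (rule Gv.finsum_smult_ldistr[OF fS e1c]) (use module_hom_closed[OF hy] dterm_closed[OF c i1] in blast)
    also have "\<dots> = finsum (G v) (T b) (S - ?y)"
    proof (rule Gv.finsum_cong'[OF refl])
      show "T b \<in> S - ?y \<rightarrow> carrier (G v)" using Tc b'i by blast
      fix b' assume b': "b' \<in> S - ?y"
      note i2 = ins[OF i1 b']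
      have cc: "c (insert b' ?y) \<in> carrier (G (insert b' ?y))" using chains_apply_carrier[OF c i2] .
      have h2: "g (insert b' ?y) ?y \<in> module_hom R (G (insert b' ?y)) (G ?y)" using homg[OF _ i2(1)] by blast
      have gc: "g (insert b' ?y) v (c (insert b' ?y)) \<in> carrier (G v)" using Wc b'i[OF b'] by blast
      let ?e2 = "?e (card {x \<in> insert b' ?y. x < b'})"
      have "g ?y v (dterm R G g c ?y b') = ?e2 \<odot>\<^bsub>G v\<^esub> g ?y v (g (insert b' ?y) ?y (c (insert b' ?y)))"
        unfolding dterm_def using module_hom_smult[OF hy sg_closed module_hom_closed[OF h2 cc]] .
      also have "g ?y v (g (insert b' ?y) ?y (c (insert b' ?y))) = g (insert b' ?y) v (c (insert b' ?y))"
        by (rule funct) (use i2 cc in auto)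
      finally have "?e1 \<odot>\<^bsub>G v\<^esub> g ?y v (dterm R G g c ?y b') = ?e1 \<odot>\<^bsub>G v\<^esub> (?e2 \<odot>\<^bsub>G v\<^esub> g (insert b' ?y) v (c (insert b' ?y)))"
        by simp
      also have "\<dots> = T b b'" unfolding T_def using Gv.smult_assoc1[OF e1c sg_closed gc] by simp
      finally show "?e1 \<odot>\<^bsub>G v\<^esub> g ?y v (dterm R G g c ?y b') = T b b'" .
    qed
    finally show ?thesis unfolding Sy .
  qed
  have "cell_diff R S G g k (cell_diff R S G g (Suc k) c) v
      = finsum (G v) (\<lambda>b. finsum (G v) (T b) ((S - v) - {b})) (S - v)"
    unfolding diff_apply[OF v]
  proof (rule Gv.finsum_cong'[OF refl])
    have "finsum (G v) (T b) ((S - v) - {b}) \<in> carrier (G v)" if "b \<in> S - v" for b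
      by (rule Gv.finsum_closed, rule Pi_I, rule Tc) (use that in blast)+
    then show "(\<lambda>b. finsum (G v) (T b) ((S - v) - {b})) \<in> S - v \<rightarrow> carrier (G v)" by blast
  next
    fix b assume "b \<in> S - v"
    then show "dterm R G g (cell_diff R S G g (Suc k) c) v b = finsum (G v) (T b) ((S - v) - {b})"
      by (rule inner)
  qed
  also have "\<dots> = \<zero>\<^bsub>G v\<^esub>"
  proof (rule antisym_double_sum[OF module.axioms(2)[OF modG[OF v(1)]]])
    show "finite (S - v)" using fin by blast
    show "\<And>b b'. b \<in> S - v \<Longrightarrow> b' \<in> S - v \<Longrightarrow> b \<noteq> b' \<Longrightarrow> T b b' \<in> carrier (G v)" by (rule Tc)
    show "\<And>b b'. b \<in> S - v \<Longrightarrow> b' \<in> S - v \<Longrightarrow> b \<noteq> b' \<Longrightarrow> T b b' = \<ominus>\<^bsub>G v\<^esub> T b' b" by (rule Ta)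
  qed
  finally show "cell_diff R S G g k (cell_diff R S G g (Suc k) c) v = \<zero>\<^bsub>cell_chains S G k\<^esub> v"
    unfolding chains_zero_apply[OF v] .
qed

end




lemma hom_image_submod:
  assumes M: "module R M" and N: "module R N" and h: "h \<in> module_hom R M N"
  shows "submod R N (h ` carrier M)"
proof (rule submodI[OF N])
  interpret M: module R M by (rule M)
  interpret N: module R N by (rule N)
  show "h ` carrier M \<subseteq> carrier N" using module_hom_closed[OF h] by blast
  show "\<zero>\<^bsub>N\<^esub> \<in> h ` carrier M" using module_hom_zero[OF M N h] M.zero_closed by force
  fix x y assume "x \<in> h ` carrier M" "y \<in> h ` carrier M"
  then obtain u v where uv: "u \<in> carrier M" "v \<in> carrier M" "x = h u" "y = h v" by blast
  have "x \<oplus>\<^bsub>N\<^esub> y = h (u \<oplus>\<^bsub>M\<^esub> v)" using module_hom_add[OF h uv(1,2)] uv by simp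
  then show "x \<oplus>\<^bsub>N\<^esub> y \<in> h ` carrier M" using uv by simp
next
  interpret M: module R M by (rule M)
  fix r x assume r: "r \<in> carrier R" and "x \<in> h ` carrier M"
  then obtain u where u: "u \<in> carrier M" "x = h u" by blast
  have "r \<odot>\<^bsub>N\<^esub> x = h (r \<odot>\<^bsub>M\<^esub> u)" using module_hom_smult[OF h r u(1)] u by simp
  then show "r \<odot>\<^bsub>N\<^esub> x \<in> h ` carrier M" using u r by simp
qed

lemma coset_image:
  assumes M: "module R M" and M': "module R M'"
    and B: "submod R M B" and B': "submod R M' B'"
    and phi: "\<phi> \<in> module_hom R M M'"
    and phiB: "\<And>b. b \<in> B \<Longrightarrow> \<phi> b \<in> B'"
    and z: "z \<in> carrier M"
  shows "(\<Union>w\<in>B +>\<^bsub>M\<^esub> z. B' +>\<^bsub>M'\<^esub> \<phi> w) = B' +>\<^bsub>M'\<^esub> \<phi> z"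
proof -
  interpret M: module R M by fact
  interpret M': module R M' by fact
  interpret B: abelian_subgroup B M using submodD(6)[OF M B] .
  interpret B': abelian_subgroup B' M' using submodD(6)[OF M' B'] .
  have pc: "\<phi> x \<in> carrier M'" if "x \<in> carrier M" for x using module_hom_closed[OF phi that] .
  have "B' +>\<^bsub>M'\<^esub> \<phi> w = B' +>\<^bsub>M'\<^esub> \<phi> z" if w: "w \<in> B +>\<^bsub>M\<^esub> z" for w
  proof -
    obtain b where b: "b \<in> B" "w = b \<oplus>\<^bsub>M\<^esub> z" using w unfolding a_r_coset_def' by blast
    have bc: "b \<in> carrier M" using b(1) submodD(1)[OF M B] by blast
    have "\<phi> w = \<phi> b \<oplus>\<^bsub>M'\<^esub> \<phi> z" using b(2) module_hom_add[OF phi bc z] by simp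
    moreover have "\<phi> b \<in> B'" using phiB b(1) by blast
    ultimately have "\<phi> w \<in> B' +>\<^bsub>M'\<^esub> \<phi> z" unfolding a_r_coset_def' by blast
    then show ?thesis using B'.a_repr_independence' pc[OF z] by metis
  qed
  moreover have "z \<in> B +>\<^bsub>M\<^esub> z" using B.a_rcos_self z by blast
  ultimately show ?thesis by blast
qed

lemma quot_induced_hom:
  assumes M: "module R M" and M': "module R M'"
    and B: "submod R M B" and B': "submod R M' B'"
    and phi: "\<phi> \<in> module_hom R M M'"
    and phiB: "\<And>b. b \<in> B \<Longrightarrow> \<phi> b \<in> B'"
  shows "(\<lambda>X. \<Union>w\<in>X. B' +>\<^bsub>M'\<^esub> \<phi> w) \<in> module_hom R (quot_module M (carrier M) B) (quot_module M' (carrier M') B')"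
    (is "?h \<in> module_hom R ?Q ?Q'")
proof -
  interpret M: module R M by fact
  interpret M': module R M' by fact
  have K: "?h (B +>\<^bsub>M\<^esub> z) = B' +>\<^bsub>M'\<^esub> \<phi> z" if "z \<in> carrier M" for z
    using coset_image[OF M M' B B' phi phiB that] .
  have pc: "\<phi> x \<in> carrier M'" if "x \<in> carrier M" for x using module_hom_closed[OF phi that] .
  have carQ: "X \<in> carrier ?Q \<longleftrightarrow> (\<exists>z\<in>carrier M. X = B +>\<^bsub>M\<^esub> z)" for X
    unfolding quot_carrier by blast
  have carQ': "X \<in> carrier ?Q' \<longleftrightarrow> (\<exists>z\<in>carrier M'. X = B' +>\<^bsub>M'\<^esub> z)" for X
    unfolding quot_carrier by blast
  show ?thesis
    unfolding module_hom_def
  proof (intro CollectI conjI ballI)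
    show "?h \<in> carrier ?Q \<rightarrow> carrier ?Q'"
    proof
      fix X assume "X \<in> carrier ?Q"
      then obtain z where z: "z \<in> carrier M" "X = B +>\<^bsub>M\<^esub> z" unfolding carQ by blast
      have "?h X = B' +>\<^bsub>M'\<^esub> \<phi> z" using K z by blast
      then show "?h X \<in> carrier ?Q'" unfolding carQ' using pc z(1) by blast
    qed
  next
    fix X Y assume "X \<in> carrier ?Q" "Y \<in> carrier ?Q"
    then obtain x y where xy: "x \<in> carrier M" "X = B +>\<^bsub>M\<^esub> x" "y \<in> carrier M" "Y = B +>\<^bsub>M\<^esub> y"
      unfolding carQ by meson
    have xc: "x \<in> carrier M" "y \<in> carrier M" using xy by auto
    have "?h (X \<oplus>\<^bsub>?Q\<^esub> Y) = ?h (B +>\<^bsub>M\<^esub> (x \<oplus>\<^bsub>M\<^esub> y))"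
      unfolding xy(2,4) quot_add[OF M B xc] ..
    also have "\<dots> = B' +>\<^bsub>M'\<^esub> (\<phi> x \<oplus>\<^bsub>M'\<^esub> \<phi> y)"
      using K[of "x \<oplus>\<^bsub>M\<^esub> y"] module_hom_add[OF phi xc] xc by simp
    also have "\<dots> = ?h X \<oplus>\<^bsub>?Q'\<^esub> ?h Y"
      unfolding xy(2,4) K[OF xc(1)] K[OF xc(2)] quot_add[OF M' B' pc[OF xc(1)] pc[OF xc(2)]] ..
    finally show "?h (X \<oplus>\<^bsub>?Q\<^esub> Y) = ?h X \<oplus>\<^bsub>?Q'\<^esub> ?h Y" .
  next
    fix r X assume r: "r \<in> carrier R" and "X \<in> carrier ?Q"
    then obtain x where xy: "x \<in> carrier M" "X = B +>\<^bsub>M\<^esub> x" unfolding carQ by meson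
    have xc: "x \<in> carrier M" using xy by auto
    have "?h (r \<odot>\<^bsub>?Q\<^esub> X) = ?h (B +>\<^bsub>M\<^esub> (r \<odot>\<^bsub>M\<^esub> x))"
      unfolding xy(2) quot_smult[OF M B xc r] ..
    also have "\<dots> = B' +>\<^bsub>M'\<^esub> (r \<odot>\<^bsub>M'\<^esub> \<phi> x)"
      using K[of "r \<odot>\<^bsub>M\<^esub> x"] module_hom_smult[OF phi r xc] xc r by simp
    also have "\<dots> = r \<odot>\<^bsub>?Q'\<^esub> ?h X"
      unfolding xy(2) K[OF xc] quot_smult[OF M' B' pc[OF xc] r] ..
    finally show "?h (r \<odot>\<^bsub>?Q\<^esub> X) = r \<odot>\<^bsub>?Q'\<^esub> ?h X" .
  qed
qed

locale thm5 =
  fixes R :: "'r ring" and A :: "'a::linorder set" and a :: 'a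
    and F :: "'a set \<Rightarrow> ('r, 'm) module" and f :: "'a set \<Rightarrow> 'a set \<Rightarrow> 'm \<Rightarrow> 'm"
  assumes cr: "cring R"
    and fin: "finite A"
    and sheaf: "is_sheaf R A F f"
    and aA: "a \<in> A"
    and injf: "\<forall>x. x \<subseteq> A - {a} \<longrightarrow> inj_on (f (insert a x) x) (carrier (F (insert a x)))"
begin

lemma F_sh: "sh R A F f"
proof -
  have s1: "\<forall>x. x \<subseteq> A \<longrightarrow> module R (F x)"
    and s2: "\<forall>x y. x \<subseteq> y \<and> y \<subseteq> A \<longrightarrow> f y x \<in> module_hom R (F y) (F x)"
    and s4: "\<forall>x y z. x \<subseteq> y \<and> y \<subseteq> z \<and> z \<subseteq> A \<longrightarrow> (\<forall>v\<in>carrier (F z). f y x (f z y v) = f z x v)"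
  proof -
    note sd = sheaf[unfolded is_sheaf_def]
    show "\<forall>x. x \<subseteq> A \<longrightarrow> module R (F x)" using conjunct1[OF sd] .
    show "\<forall>x y. x \<subseteq> y \<and> y \<subseteq> A \<longrightarrow> f y x \<in> module_hom R (F y) (F x)" using conjunct1[OF conjunct2[OF sd]] .
    show "\<forall>x y z. x \<subseteq> y \<and> y \<subseteq> z \<and> z \<subseteq> A \<longrightarrow> (\<forall>v\<in>carrier (F z). f y x (f z y v) = f z x v)"
      using conjunct2[OF conjunct2[OF conjunct2[OF sd]]] .
  qed
  have "presheaf R A F f" unfolding presheaf_def using cr s1 s2 by (intro conjI)
  then have p: "psh R A F f" by (intro psh.intro fin)
  show ?thesis
  proof (rule sh.intro[OF p], rule sh_axioms.intro)
    fix x y z v assume "x \<subseteq> y" "y \<subseteq> z" "z \<subseteq> A" "v \<in> carrier (F z)"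
    then show "f y x (f z y v) = f z x v" using s4 by blast
  qed
qed

sublocale FF: sh R A F f by (rule F_sh)

definition N :: "'a set \<Rightarrow> 'm set" where
  "N y = f (insert a y) y ` carrier (F (insert a y))"

lemma ins_a: "y \<subseteq> A - {a} \<Longrightarrow> insert a y \<subseteq> A" using aA by blast

lemma hom_a: "y \<subseteq> A - {a} \<Longrightarrow> f (insert a y) y \<in> module_hom R (F (insert a y)) (F y)"
  using FF.homg[OF _ ins_a] by blast

lemma N_submod: "y \<subseteq> A - {a} \<Longrightarrow> submod R (F y) (N y)"
  unfolding N_def using hom_image_submod[OF FF.modG[OF ins_a] FF.modG hom_a] by blast

lemma fN:
  assumes "x \<subseteq> y" "y \<subseteq> A - {a}" "n \<in> N y"
  shows "f y x n \<in> N x"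
proof -
  obtain u where u: "u \<in> carrier (F (insert a y))" "n = f (insert a y) y u" using assms(3) unfolding N_def by blast
  have "f y x n = f (insert a y) x u" using FF.funct[OF assms(1) subset_insertI ins_a[OF assms(2)] u(1)] u(2) by simp
  also have "\<dots> = f (insert a x) x (f (insert a y) (insert a x) u)"
    using FF.funct[OF subset_insertI insert_mono[OF assms(1)] ins_a[OF assms(2)] u(1)] by simp
  finally show ?thesis unfolding N_def
    using module_hom_closed[OF FF.homg[OF _ ins_a[OF assms(2)]] u(1), of "insert a x"] assms by blast
qed

abbreviation "G \<equiv> quot_sheaf F f a"
abbreviation "gq \<equiv> quot_sheaf_map F f a"

lemma G_eq: "G y = quot_module (F y) (carrier (F y)) (N y)"
  unfolding quot_sheaf_def N_def ..

lemma gq_eq: "gq y x X = (\<Union>v\<in>X. N x +>\<^bsub>F x\<^esub> f y x v)"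
  unfolding quot_sheaf_map_def N_def ..

lemma G_mod: "y \<subseteq> A - {a} \<Longrightarrow> module R (G y)"
  unfolding G_eq using quot_module_module[OF FF.modG N_submod] by blast

lemma gq_hom:
  assumes "x \<subseteq> y" "y \<subseteq> A - {a}"
  shows "gq y x \<in> module_hom R (G y) (G x)"
proof -
  have "(\<lambda>X. \<Union>v\<in>X. N x +>\<^bsub>F x\<^esub> f y x v) \<in> module_hom R (G y) (G x)"
    unfolding G_eq
    by (rule quot_induced_hom[OF FF.modG FF.modG N_submod N_submod FF.homg fN])
       (use assms in auto)
  then show ?thesis unfolding gq_eq[abs_def] by simp
qed

lemma gq_coset:
  assumes "x \<subseteq> y" "y \<subseteq> A - {a}" "v \<in> carrier (F y)"
  shows "gq y x (N y +>\<^bsub>F y\<^esub> v) = N x +>\<^bsub>F x\<^esub> f y x v"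
  unfolding gq_eq
  by (rule coset_image[OF FF.modG FF.modG N_submod N_submod FF.homg fN]) (use assms in auto)

lemma Q_psh: "psh R (A - {a}) G gq"
  unfolding psh_def presheaf_def using cr G_mod gq_hom fin by blast

sublocale QQ: psh R "A - {a}" G gq by (rule Q_psh)

end




context thm5
begin

definition Phi :: "nat \<Rightarrow> ('a set \<Rightarrow> 'm) \<Rightarrow> ('a set \<Rightarrow> 'm set)" where
  "Phi k c = (\<lambda>y. if y \<subseteq> A - {a} \<and> card y = k then N y +>\<^bsub>F y\<^esub> c y else undefined)"

lemma Phi_apply: "y \<subseteq> A - {a} \<Longrightarrow> card y = k \<Longrightarrow> Phi k c y = N y +>\<^bsub>F y\<^esub> c y"
  unfolding Phi_def by simp

lemma subS: "y \<subseteq> A - {a} \<Longrightarrow> y \<subseteq> A" by blast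

lemma pi_hom: "y \<subseteq> A - {a} \<Longrightarrow> (\<lambda>v. N y +>\<^bsub>F y\<^esub> v) \<in> module_hom R (F y) (G y)"
  unfolding G_eq using quot_map_hom[OF FF.modG[OF subS] N_submod] by blast

lemma G_zero: "y \<subseteq> A - {a} \<Longrightarrow> \<zero>\<^bsub>G y\<^esub> = N y +>\<^bsub>F y\<^esub> \<zero>\<^bsub>F y\<^esub>"
  unfolding G_eq using quot_zero[OF FF.modG[OF subS] N_submod] by blast

lemma pi_zero_iff: "y \<subseteq> A - {a} \<Longrightarrow> v \<in> carrier (F y) \<Longrightarrow> N y +>\<^bsub>F y\<^esub> v = \<zero>\<^bsub>G y\<^esub> \<longleftrightarrow> v \<in> N y"
  unfolding G_eq using quot_map_zero_iff[OF FF.modG[OF subS] N_submod] by blast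

lemma G_carrier: "carrier (G y) = (\<lambda>v. N y +>\<^bsub>F y\<^esub> v) ` carrier (F y)"
  unfolding G_eq quot_carrier ..

lemma Phi_closed:
  assumes c: "c \<in> carrier (cell_chains A F k)"
  shows "Phi k c \<in> carrier (cell_chains (A - {a}) G k)"
proof -
  have "Phi k c y \<in> carrier (G y)" if y: "y \<subseteq> A - {a}" "card y = k" for y
    unfolding Phi_apply[OF y] G_carrier using chains_apply_carrier[OF c subS[OF y(1)] y(2)] by blast
  moreover have "Phi k c y = undefined" if "\<not> (y \<subseteq> A - {a} \<and> card y = k)" for y
    using that unfolding Phi_def by auto
  ultimately show ?thesis unfolding chains_carrier_iff by blast
qed

lemma Phi_hom: "Phi k \<in> module_hom R (cell_chains A F k) (cell_chains (A - {a}) G k)"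
  unfolding module_hom_def
proof (intro CollectI conjI ballI)
  show "Phi k \<in> carrier (cell_chains A F k) \<rightarrow> carrier (cell_chains (A - {a}) G k)"
    using Phi_closed by blast
next
  interpret C: module R "cell_chains A F k" by (rule FF.modC)
  interpret Q: module R "cell_chains (A - {a}) G k" by (rule QQ.modC)
  fix c d assume c: "c \<in> carrier (cell_chains A F k)" and d: "d \<in> carrier (cell_chains A F k)"
  show "Phi k (c \<oplus>\<^bsub>cell_chains A F k\<^esub> d) = Phi k c \<oplus>\<^bsub>cell_chains (A - {a}) G k\<^esub> Phi k d"
  proof (rule chains_eqI)
    show "Phi k (c \<oplus>\<^bsub>cell_chains A F k\<^esub> d) \<in> carrier (cell_chains (A - {a}) G k)"
      by (rule Phi_closed) (use c d in simp)
    show "Phi k c \<oplus>\<^bsub>cell_chains (A - {a}) G k\<^esub> Phi k d \<in> carrier (cell_chains (A - {a}) G k)"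
      using Phi_closed[OF c] Phi_closed[OF d] by simp
    fix y assume y: "y \<subseteq> A - {a}" "card y = k"
    have cy: "c y \<in> carrier (F y)" "d y \<in> carrier (F y)"
      using chains_apply_carrier[OF c subS[OF y(1)] y(2)] chains_apply_carrier[OF d subS[OF y(1)] y(2)] by auto
    show "Phi k (c \<oplus>\<^bsub>cell_chains A F k\<^esub> d) y = (Phi k c \<oplus>\<^bsub>cell_chains (A - {a}) G k\<^esub> Phi k d) y"
      unfolding Phi_apply[OF y] chains_add_apply[OF y] chains_add_apply[OF subS[OF y(1)] y(2)]
      using module_hom_add[OF pi_hom[OF y(1)] cy] .
  qed
next
  interpret C: module R "cell_chains A F k" by (rule FF.modC)
  interpret Q: module R "cell_chains (A - {a}) G k" by (rule QQ.modC)
  fix r c assume r: "r \<in> carrier R" and c: "c \<in> carrier (cell_chains A F k)"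
  show "Phi k (r \<odot>\<^bsub>cell_chains A F k\<^esub> c) = r \<odot>\<^bsub>cell_chains (A - {a}) G k\<^esub> Phi k c"
  proof (rule chains_eqI)
    show "Phi k (r \<odot>\<^bsub>cell_chains A F k\<^esub> c) \<in> carrier (cell_chains (A - {a}) G k)"
      by (rule Phi_closed) (use c r in simp)
    show "r \<odot>\<^bsub>cell_chains (A - {a}) G k\<^esub> Phi k c \<in> carrier (cell_chains (A - {a}) G k)"
      using Phi_closed[OF c] r by simp
    fix y assume y: "y \<subseteq> A - {a}" "card y = k"
    have cy: "c y \<in> carrier (F y)"
      using chains_apply_carrier[OF c subS[OF y(1)] y(2)] by auto
    show "Phi k (r \<odot>\<^bsub>cell_chains A F k\<^esub> c) y = (r \<odot>\<^bsub>cell_chains (A - {a}) G k\<^esub> Phi k c) y"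
      unfolding Phi_apply[OF y] chains_smult_apply[OF y] chains_smult_apply[OF subS[OF y(1)] y(2)]
      using module_hom_smult[OF pi_hom[OF y(1)] r cy] .
  qed
qed

lemma Phi_chain:
  assumes c: "c \<in> carrier (cell_chains A F (Suc k))"
  shows "Phi k (cell_diff R A F f k c) = cell_diff R (A - {a}) G gq k (Phi (Suc k) c)"
proof (rule chains_eqI)
  show "Phi k (cell_diff R A F f k c) \<in> carrier (cell_chains (A - {a}) G k)"
    by (rule Phi_closed, rule FF.diff_closed, rule c)
  show "cell_diff R (A - {a}) G gq k (Phi (Suc k) c) \<in> carrier (cell_chains (A - {a}) G k)"
    by (rule QQ.diff_closed, rule Phi_closed, rule c)
  fix y assume y: "y \<subseteq> A - {a}" "card y = k"
  note yA = subS[OF y(1)]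
  interpret Fy: module R "F y" using FF.modG[OF yA] .
  interpret Gy: module R "G y" using G_mod[OF y(1)] .
  let ?pi = "\<lambda>v. N y +>\<^bsub>F y\<^esub> v"
  have fS: "finite (A - {a} - y)" using fin by blast
  have dt: "dterm R G gq (Phi (Suc k) c) y b = ?pi (dterm R F f c y b)" if b: "b \<in> A - {a} - y" for b
  proof -
    note i = QQ.ins[OF y b]
    have cb: "c (insert b y) \<in> carrier (F (insert b y))"
      using chains_apply_carrier[OF c subS[OF i(1)] i(2)] .
    have fc: "f (insert b y) y (c (insert b y)) \<in> carrier (F y)"
      using module_hom_closed[OF FF.homg[OF _ subS[OF i(1)]] cb] by blast
    show ?thesis
      unfolding dterm_def Phi_apply[OF i] gq_coset[OF subset_insertI i(1) cb]
      using module_hom_smult[OF pi_hom[OF y(1)] FF.sg_closed fc] by simp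
  qed
  have dtc: "dterm R F f c y \<in> A - y \<rightarrow> carrier (F y)" using FF.dterm_Pi[OF c yA y(2)] .
  have ay: "a \<notin> A - {a} - y" "A - y = insert a (A - {a} - y)" using aA y by auto
  have "cell_diff R (A - {a}) G gq k (Phi (Suc k) c) y = finsum (G y) (\<lambda>b. ?pi (dterm R F f c y b)) (A - {a} - y)"
    unfolding diff_apply[OF y] by (rule Gy.finsum_cong'[OF refl]) (use dt module_hom_closed[OF pi_hom[OF y(1)]] dtc in auto)
  also have "\<dots> = ?pi (finsum (F y) (dterm R F f c y) (A - {a} - y))"
    by (rule module_hom_finsum[OF FF.modG[OF yA] G_mod[OF y(1)] pi_hom[OF y(1)] fS, symmetric]) (use dtc in auto)
  also have "\<dots> = ?pi (finsum (F y) (dterm R F f c y) (A - y))"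
  proof -
    have da: "dterm R F f c y a \<in> N y"
    proof -
      have "insert a y \<subseteq> A" "card (insert a y) = Suc k" using FF.ins[OF yA y(2)] aA y by auto
      then have "c (insert a y) \<in> carrier (F (insert a y))" using chains_apply_carrier[OF c] by blast
      then have "f (insert a y) y (c (insert a y)) \<in> N y" unfolding N_def by blast
      then show ?thesis unfolding dterm_def using submodD(5)[OF FF.modG[OF yA] N_submod[OF y(1)] FF.sg_closed] by blast
    qed
    have dac: "dterm R F f c y a \<in> carrier (F y)" using dtc aA y by auto
    have rc: "finsum (F y) (dterm R F f c y) (A - {a} - y) \<in> carrier (F y)"
      by (rule Fy.finsum_closed) (use dtc in auto)
    have "finsum (F y) (dterm R F f c y) (A - y) = dterm R F f c y a \<oplus>\<^bsub>F y\<^esub> finsum (F y) (dterm R F f c y) (A - {a} - y)"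
      unfolding ay(2) by (rule Fy.finsum_insert[OF fS ay(1)]) (use dtc dac in auto)
    then have "?pi (finsum (F y) (dterm R F f c y) (A - y)) = ?pi (dterm R F f c y a) \<oplus>\<^bsub>G y\<^esub> ?pi (finsum (F y) (dterm R F f c y) (A - {a} - y))"
      using module_hom_add[OF pi_hom[OF y(1)] dac rc] by simp
    also have "\<dots> = \<zero>\<^bsub>G y\<^esub> \<oplus>\<^bsub>G y\<^esub> ?pi (finsum (F y) (dterm R F f c y) (A - {a} - y))"
      using pi_zero_iff[OF y(1) dac] da by simp
    also have "\<dots> = ?pi (finsum (F y) (dterm R F f c y) (A - {a} - y))"
      using Gy.l_zero module_hom_closed[OF pi_hom[OF y(1)] rc] by blast
    finally show ?thesis by simp
  qed
  also have "\<dots> = Phi k (cell_diff R A F f k c) y"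
    unfolding Phi_apply[OF y] diff_apply[OF yA y(2)] ..
  finally show "Phi k (cell_diff R A F f k c) y = cell_diff R (A - {a}) G gq k (Phi (Suc k) c) y" by simp
qed

lemma Phi_lift:
  assumes q: "q \<in> carrier (cell_chains (A - {a}) G k)"
  shows "\<exists>c \<in> carrier (cell_chains A F k). Phi k c = q"
proof -
  define c where "c y = (if y \<subseteq> A - {a} \<and> card y = k then (SOME v. v \<in> carrier (F y) \<and> q y = N y +>\<^bsub>F y\<^esub> v)
     else if y \<subseteq> A \<and> card y = k then \<zero>\<^bsub>F y\<^esub> else undefined)" for y
  have ex: "\<exists>v. v \<in> carrier (F y) \<and> q y = N y +>\<^bsub>F y\<^esub> v" if y: "y \<subseteq> A - {a}" "card y = k" for y
    using chains_apply_carrier[OF q y] unfolding G_carrier by blast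
  have cS: "c y \<in> carrier (F y) \<and> q y = N y +>\<^bsub>F y\<^esub> c y" if y: "y \<subseteq> A - {a}" "card y = k" for y
    unfolding c_def using someI_ex[OF ex[OF y]] y by simp
  have cc: "c \<in> carrier (cell_chains A F k)"
    unfolding chains_carrier_iff
  proof (intro conjI allI impI)
    fix y assume y: "y \<subseteq> A \<and> card y = k"
    show "c y \<in> carrier (F y)"
    proof (cases "y \<subseteq> A - {a}")
      case True then show ?thesis using cS y by blast
    next
      case False
      interpret Fy: module R "F y" using FF.modG y by blast
      show ?thesis using False y unfolding c_def by simp
    qed
  next
    fix y assume "\<not> (y \<subseteq> A \<and> card y = k)"
    then show "c y = undefined" unfolding c_def by auto
  qed
  have "Phi k c = q"
  proof (rule chains_eqI[OF Phi_closed[OF cc] q])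
    fix y assume "y \<subseteq> A - {a}" "card y = k"
    then show "Phi k c y = q y" using Phi_apply cS by metis
  qed
  then show ?thesis using cc by blast
qed

end




lemma mg_eq:
  assumes M: "module R M" and xy: "x \<in> carrier M" "y \<in> carrier M" and e: "x \<oplus>\<^bsub>M\<^esub> \<ominus>\<^bsub>M\<^esub> y = \<zero>\<^bsub>M\<^esub>"
  shows "x = y"
proof -
  interpret M: module R M by fact
  have "x = x \<oplus>\<^bsub>M\<^esub> (\<ominus>\<^bsub>M\<^esub> y \<oplus>\<^bsub>M\<^esub> y)" using xy by (simp add: M.l_neg)
  also have "\<dots> = (x \<oplus>\<^bsub>M\<^esub> \<ominus>\<^bsub>M\<^esub> y) \<oplus>\<^bsub>M\<^esub> y" using xy by (simp add: M.a_assoc)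
  also have "\<dots> = y" using e xy by simp
  finally show ?thesis .
qed

lemma mg_minus_zero:
  assumes M: "module R M"
  shows "\<ominus>\<^bsub>M\<^esub> \<zero>\<^bsub>M\<^esub> = \<zero>\<^bsub>M\<^esub>"
proof -
  interpret M: module R M by fact
  have "\<zero>\<^bsub>M\<^esub> \<oplus>\<^bsub>M\<^esub> \<ominus>\<^bsub>M\<^esub> \<zero>\<^bsub>M\<^esub> = \<zero>\<^bsub>M\<^esub>" by (rule M.r_neg) simp
  moreover have "\<zero>\<^bsub>M\<^esub> \<oplus>\<^bsub>M\<^esub> \<ominus>\<^bsub>M\<^esub> \<zero>\<^bsub>M\<^esub> = \<ominus>\<^bsub>M\<^esub> \<zero>\<^bsub>M\<^esub>" by (rule M.l_zero) simp
  ultimately show ?thesis by simp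
qed

lemma mg_minus_smult:
  assumes M: "module R M" and x: "x \<in> carrier M"
  shows "\<ominus>\<^bsub>M\<^esub> x = (\<ominus>\<^bsub>R\<^esub> \<one>\<^bsub>R\<^esub>) \<odot>\<^bsub>M\<^esub> x"
proof -
  interpret M: module R M by fact
  show ?thesis using M.smult_l_minus[of "\<one>\<^bsub>R\<^esub>" x] x by simp
qed

lemma chains_inv_apply:
  assumes R: "cring R" and modG: "\<And>x. x \<subseteq> S \<Longrightarrow> module R (G x)"
    and c: "c \<in> carrier (cell_chains S G k)" and y: "y \<subseteq> S" "card y = k"
  shows "(\<ominus>\<^bsub>cell_chains S G k\<^esub> c) y = \<ominus>\<^bsub>G y\<^esub> c y"
proof -
  interpret R: cring R by (rule R)
  have "(\<ominus>\<^bsub>cell_chains S G k\<^esub> c) y = ((\<ominus>\<^bsub>R\<^esub> \<one>\<^bsub>R\<^esub>) \<odot>\<^bsub>cell_chains S G k\<^esub> c) y"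
    using mg_minus_smult[OF chains_module[OF R modG] c] by simp
  also have "\<dots> = (\<ominus>\<^bsub>R\<^esub> \<one>\<^bsub>R\<^esub>) \<odot>\<^bsub>G y\<^esub> c y" by (rule chains_smult_apply[OF y])
  also have "\<dots> = \<ominus>\<^bsub>G y\<^esub> c y" using mg_minus_smult[OF modG[OF y(1)] chains_apply_carrier[OF c y]] by simp
  finally show ?thesis .
qed

lemma sg_sq:
  assumes R: "cring R"
  shows "(\<ominus>\<^bsub>R\<^esub> \<one>\<^bsub>R\<^esub>) [^]\<^bsub>R\<^esub> (n::nat) \<otimes>\<^bsub>R\<^esub> (\<ominus>\<^bsub>R\<^esub> \<one>\<^bsub>R\<^esub>) [^]\<^bsub>R\<^esub> n = \<one>\<^bsub>R\<^esub>"
proof (induction n)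
  case 0
  interpret R: cring R by (rule R)
  show ?case by simp
next
  case (Suc n)
  interpret R: cring R by (rule R)
  let ?x = "(\<ominus>\<^bsub>R\<^esub> \<one>\<^bsub>R\<^esub>) [^]\<^bsub>R\<^esub> n"
  have xc: "?x \<in> carrier R" by simp
  have "(\<ominus>\<^bsub>R\<^esub> \<one>\<^bsub>R\<^esub>) [^]\<^bsub>R\<^esub> Suc n = \<ominus>\<^bsub>R\<^esub> ?x" using R.r_minus[OF xc R.one_closed] by simp
  then show ?case using Suc.IH xc by (simp add: R.l_minus R.r_minus)
qed

lemma sg_cancel:
  assumes M: "module R M" and v: "v \<in> carrier M"
  shows "(\<ominus>\<^bsub>R\<^esub> \<one>\<^bsub>R\<^esub>) [^]\<^bsub>R\<^esub> (n::nat) \<odot>\<^bsub>M\<^esub> ((\<ominus>\<^bsub>R\<^esub> \<one>\<^bsub>R\<^esub>) [^]\<^bsub>R\<^esub> n \<odot>\<^bsub>M\<^esub> v) = v"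
proof -
  interpret M: module R M by fact
  have "(\<ominus>\<^bsub>R\<^esub> \<one>\<^bsub>R\<^esub>) [^]\<^bsub>R\<^esub> n \<in> carrier R" by simp
  then show ?thesis using M.smult_assoc1[symmetric] sg_sq[OF M.is_cring, of n] v by simp
qed

context thm5
begin

lemma zero_chain_apply:
  "x \<subseteq> A \<Longrightarrow> card x = m \<Longrightarrow> \<zero>\<^bsub>cell_chains A F m\<^esub> x = \<zero>\<^bsub>F x\<^esub>"
  by (rule chains_zero_apply)

lemma dterm_zero:
  assumes w: "w \<in> carrier (cell_chains A F (Suc j))" and y: "y \<subseteq> A" "card y = j"
    and b: "b \<in> A - y" and wz: "w (insert b y) = \<zero>\<^bsub>F (insert b y)\<^esub>"
  shows "dterm R F f w y b = \<zero>\<^bsub>F y\<^esub>"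
proof -
  note i = FF.ins[OF y b]
  interpret Fy: module R "F y" using FF.modG[OF y(1)] .
  have h: "f (insert b y) y \<in> module_hom R (F (insert b y)) (F y)" using FF.homg[OF _ i(1)] by blast
  show ?thesis unfolding dterm_def wz module_hom_zero[OF FF.modG[OF i(1)] FF.modG[OF y(1)] h]
    using FF.sg_closed by simp
qed

lemma diff_single_a:
  assumes w: "w \<in> carrier (cell_chains A F (Suc j))" and y: "y \<subseteq> A - {a}" "card y = j"
    and wz: "\<And>b. b \<in> A - {a} - y \<Longrightarrow> w (insert b y) = \<zero>\<^bsub>F (insert b y)\<^esub>"
  shows "cell_diff R A F f j w y = dterm R F f w y a"
proof -
  note yA = subS[OF y(1)]
  interpret Fy: module R "F y" using FF.modG[OF yA] .
  have dtc: "dterm R F f w y \<in> A - y \<rightarrow> carrier (F y)" using FF.dterm_Pi[OF w yA y(2)] .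
  have ay: "a \<notin> A - {a} - y" "A - y = insert a (A - {a} - y)" using aA y by auto
  have fS: "finite (A - {a} - y)" using fin by blast
  have "cell_diff R A F f j w y = dterm R F f w y a \<oplus>\<^bsub>F y\<^esub> finsum (F y) (dterm R F f w y) (A - {a} - y)"
    unfolding diff_apply[OF yA y(2)] ay(2) by (rule Fy.finsum_insert[OF fS ay(1)]) (use dtc ay in auto)
  also have "finsum (F y) (dterm R F f w y) (A - {a} - y) = finsum (F y) (\<lambda>b. \<zero>\<^bsub>F y\<^esub>) (A - {a} - y)"
    by (rule Fy.finsum_cong'[OF refl]) (use dterm_zero[OF w yA y(2) _ wz] in auto)
  also have "\<dots> = \<zero>\<^bsub>F y\<^esub>" by simp
  finally show ?thesis using dtc ay by auto
qed

lemma vanish: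
  assumes w: "w \<in> carrier (cell_chains A F m)"
    and cyc: "m = 0 \<or> cell_diff R A F f (m - 1) w = \<zero>\<^bsub>cell_chains A F (m - 1)\<^esub>"
    and wS: "\<And>y. y \<subseteq> A - {a} \<Longrightarrow> card y = m \<Longrightarrow> w y = \<zero>\<^bsub>F y\<^esub>"
  shows "w = \<zero>\<^bsub>cell_chains A F m\<^esub>"
proof (rule chains_eqI[OF w])
  interpret C: module R "cell_chains A F m" by (rule FF.modC)
  show "\<zero>\<^bsub>cell_chains A F m\<^esub> \<in> carrier (cell_chains A F m)" by simp
  fix x assume x: "x \<subseteq> A" "card x = m"
  show "w x = \<zero>\<^bsub>cell_chains A F m\<^esub> x"
  proof (cases "a \<in> x")
    case False
    then have "x \<subseteq> A - {a}" using x by blast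
    then show ?thesis unfolding zero_chain_apply[OF x] by (rule wS) (rule x(2))
  next
    case True
    define y where "y = x - {a}"
    have y: "y \<subseteq> A - {a}" using x unfolding y_def by blast
    have fx: "finite x" using x fin finite_subset by blast
    have xy: "x = insert a y" using True unfolding y_def by blast
    have cy: "m = Suc (card y)" using card_Suc_Diff1[OF fx True] x(2) unfolding y_def by simp
    define j where "j = card y"
    have mj: "m = Suc j" "m - 1 = j" using cy unfolding j_def by auto
    have w': "w \<in> carrier (cell_chains A F (Suc j))" using w mj by simp
    have d0: "cell_diff R A F f j w = \<zero>\<^bsub>cell_chains A F j\<^esub>" using cyc mj by simp
    have wz: "w (insert b y) = \<zero>\<^bsub>F (insert b y)\<^esub>" if "b \<in> A - {a} - y" for b
    proof (rule wS)
      show "insert b y \<subseteq> A - {a}" using that y by blast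
      have "finite y" using y fin finite_subset by blast
      then show "card (insert b y) = m" using that mj unfolding j_def by simp
    qed
    have "dterm R F f w y a = \<zero>\<^bsub>F y\<^esub>"
      using diff_single_a[OF w' y j_def[symmetric] wz] d0 zero_chain_apply[OF subS[OF y] j_def[symmetric]] by simp
    then have e: "(\<ominus>\<^bsub>R\<^esub> \<one>\<^bsub>R\<^esub>) [^]\<^bsub>R\<^esub> card {b' \<in> x. b' < a} \<odot>\<^bsub>F y\<^esub> f x y (w x) = \<zero>\<^bsub>F y\<^esub>"
      unfolding dterm_def xy by simp
    interpret Fy: module R "F y" using FF.modG[OF subS[OF y]] .
    have wx: "w x \<in> carrier (F x)" using chains_apply_carrier[OF w x] .
    have h: "f x y \<in> module_hom R (F x) (F y)" using hom_a[OF y] xy by simp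
    have fw: "f x y (w x) \<in> carrier (F y)" using module_hom_closed[OF h wx] .
    have "f x y (w x) = (\<ominus>\<^bsub>R\<^esub> \<one>\<^bsub>R\<^esub>) [^]\<^bsub>R\<^esub> card {b' \<in> x. b' < a} \<odot>\<^bsub>F y\<^esub> ((\<ominus>\<^bsub>R\<^esub> \<one>\<^bsub>R\<^esub>) [^]\<^bsub>R\<^esub> card {b' \<in> x. b' < a} \<odot>\<^bsub>F y\<^esub> f x y (w x))"
      using sg_cancel[OF FF.modG[OF subS[OF y]] fw, of "card {b' \<in> x. b' < a}"] by simp
    also have "\<dots> = (\<ominus>\<^bsub>R\<^esub> \<one>\<^bsub>R\<^esub>) [^]\<^bsub>R\<^esub> card {b' \<in> x. b' < a} \<odot>\<^bsub>F y\<^esub> \<zero>\<^bsub>F y\<^esub>"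
      unfolding e ..
    also have "\<dots> = \<zero>\<^bsub>F y\<^esub>" using FF.sg_closed by simp
    also have "\<dots> = f x y \<zero>\<^bsub>F x\<^esub>" using module_hom_zero[OF FF.modG[OF x(1)] FF.modG[OF subS[OF y]] h] by simp
    finally have "f x y (w x) = f x y \<zero>\<^bsub>F x\<^esub>" .
    moreover have "inj_on (f x y) (carrier (F x))" using injf y unfolding xy by blast
    moreover have "\<zero>\<^bsub>F x\<^esub> \<in> carrier (F x)" using module.axioms(2)[OF FF.modG[OF x(1)]]
      by (meson abelian_group.axioms(1) abelian_monoid.zero_closed)
    ultimately have "w x = \<zero>\<^bsub>F x\<^esub>" using wx by (meson inj_onD)
    then show ?thesis using zero_chain_apply[OF x] by simp
  qed
qed

end




context thm5
begin

lemma kill: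
  assumes z: "z \<in> carrier (cell_chains A F m)"
    and cyc: "m = 0 \<or> cell_diff R A F f (m - 1) z = \<zero>\<^bsub>cell_chains A F (m - 1)\<^esub>"
    and Pz: "Phi m z = \<zero>\<^bsub>cell_chains (A - {a}) G m\<^esub>"
  shows "\<exists>e \<in> carrier (cell_chains A F (Suc m)). Phi (Suc m) e = \<zero>\<^bsub>cell_chains (A - {a}) G (Suc m)\<^esub>
            \<and> cell_diff R A F f m e = z"
proof -
  interpret R: cring R by (rule cr)
  have zN: "z y \<in> N y" if y: "y \<subseteq> A - {a}" "card y = m" for y
  proof -
    have "N y +>\<^bsub>F y\<^esub> z y = \<zero>\<^bsub>G y\<^esub>"
      using Pz Phi_apply[OF y] chains_zero_apply[OF y, of G] by metis
    then show ?thesis using pi_zero_iff[OF y(1) chains_apply_carrier[OF z subS[OF y(1)] y(2)]] by blast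
  qed
  define t where "t y = the_inv_into (carrier (F (insert a y))) (f (insert a y) y) (z y)" for y
  have tP: "t y \<in> carrier (F (insert a y)) \<and> f (insert a y) y (t y) = z y" if y: "y \<subseteq> A - {a}" "card y = m" for y
  proof -
    have inj: "inj_on (f (insert a y) y) (carrier (F (insert a y)))" using injf y by blast
    have im: "z y \<in> f (insert a y) y ` carrier (F (insert a y))" using zN[OF y] unfolding N_def .
    show ?thesis unfolding t_def using the_inv_into_into[OF inj im subset_refl] f_the_inv_into_f[OF inj im] by blast
  qed
  define e where "e x = (if x \<subseteq> A \<and> card x = Suc m then
      (if a \<in> x then (\<ominus>\<^bsub>R\<^esub> \<one>\<^bsub>R\<^esub>) [^]\<^bsub>R\<^esub> card {b' \<in> x. b' < a} \<odot>\<^bsub>F x\<^esub> t (x - {a}) else \<zero>\<^bsub>F x\<^esub>)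
      else undefined)" for x
  have ec: "e \<in> carrier (cell_chains A F (Suc m))"
    unfolding chains_carrier_iff
  proof (intro conjI allI impI)
    fix x assume x: "x \<subseteq> A \<and> card x = Suc m"
    interpret Fx: module R "F x" using FF.modG x by blast
    show "e x \<in> carrier (F x)"
    proof (cases "a \<in> x")
      case True
      have fx: "finite x" using x fin finite_subset by blast
      have y: "x - {a} \<subseteq> A - {a}" "card (x - {a}) = m" using x True fx by auto
      have "insert a (x - {a}) = x" using True by blast
      then have "t (x - {a}) \<in> carrier (F x)" using tP[OF y] by metis
      then show ?thesis unfolding e_def using x True FF.sg_closed by simp
    next
      case False
      then show ?thesis unfolding e_def using x by simp
    qed
  next
    fix x assume "\<not> (x \<subseteq> A \<and> card x = Suc m)"
    then show "e x = undefined" unfolding e_def by auto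
  qed
  have eS: "e y = \<zero>\<^bsub>F y\<^esub>" if y: "y \<subseteq> A - {a}" "card y = Suc m" for y
    using y unfolding e_def by auto
  have Pe: "Phi (Suc m) e = \<zero>\<^bsub>cell_chains (A - {a}) G (Suc m)\<^esub>"
  proof (rule chains_eqI[OF Phi_closed[OF ec]])
    interpret Q: module R "cell_chains (A - {a}) G (Suc m)" by (rule QQ.modC)
    show "\<zero>\<^bsub>cell_chains (A - {a}) G (Suc m)\<^esub> \<in> carrier (cell_chains (A - {a}) G (Suc m))" by simp
    fix y assume y: "y \<subseteq> A - {a}" "card y = Suc m"
    show "Phi (Suc m) e y = \<zero>\<^bsub>cell_chains (A - {a}) G (Suc m)\<^esub> y"
      unfolding Phi_apply[OF y] eS[OF y] chains_zero_apply[OF y] G_zero[OF y(1)] ..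
  qed
  have deS: "cell_diff R A F f m e y = z y" if y: "y \<subseteq> A - {a}" "card y = m" for y
  proof -
    have wz: "e (insert b y) = \<zero>\<^bsub>F (insert b y)\<^esub>" if b: "b \<in> A - {a} - y" for b
    proof (rule eS)
      show "insert b y \<subseteq> A - {a}" using b y by blast
      have "finite y" using y fin finite_subset by blast
      then show "card (insert b y) = Suc m" using b y by simp
    qed
    have ay: "a \<notin> y" using y by blast
    have fy: "finite y" using y fin finite_subset by blast
    have ia: "insert a y \<subseteq> A" "card (insert a y) = Suc m" using ins_a[OF y(1)] y ay fy by auto
    have iy: "insert a y - {a} = y" using ay by blast
    let ?s = "(\<ominus>\<^bsub>R\<^esub> \<one>\<^bsub>R\<^esub>) [^]\<^bsub>R\<^esub> card {b' \<in> insert a y. b' < a}"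
    have eia: "e (insert a y) = ?s \<odot>\<^bsub>F (insert a y)\<^esub> t y"
      unfolding e_def using ia iy by simp
    have tc: "t y \<in> carrier (F (insert a y))" and tz: "f (insert a y) y (t y) = z y" using tP[OF y] by auto
    have zc: "z y \<in> carrier (F y)" using chains_apply_carrier[OF z subS[OF y(1)] y(2)] .
    have "cell_diff R A F f m e y = dterm R F f e y a" by (rule diff_single_a[OF ec y wz])
    also have "\<dots> = ?s \<odot>\<^bsub>F y\<^esub> f (insert a y) y (?s \<odot>\<^bsub>F (insert a y)\<^esub> t y)"
      unfolding dterm_def eia ..
    also have "\<dots> = ?s \<odot>\<^bsub>F y\<^esub> (?s \<odot>\<^bsub>F y\<^esub> z y)"
      using module_hom_smult[OF hom_a[OF y(1)] FF.sg_closed tc] tz by simp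
    also have "\<dots> = z y" by (rule sg_cancel[OF FF.modG[OF subS[OF y(1)]] zc])
    finally show ?thesis .
  qed
  interpret C: module R "cell_chains A F m" by (rule FF.modC)
  define w where "w = cell_diff R A F f m e \<oplus>\<^bsub>cell_chains A F m\<^esub> \<ominus>\<^bsub>cell_chains A F m\<^esub> z"
  have dec: "cell_diff R A F f m e \<in> carrier (cell_chains A F m)" using FF.diff_closed[OF ec] .
  have wc: "w \<in> carrier (cell_chains A F m)" unfolding w_def using dec z by simp
  have wS: "w y = \<zero>\<^bsub>F y\<^esub>" if y: "y \<subseteq> A - {a}" "card y = m" for y
  proof -
    interpret Fy: module R "F y" using FF.modG[OF subS[OF y(1)]] .
    have zc: "z y \<in> carrier (F y)" using chains_apply_carrier[OF z subS[OF y(1)] y(2)] .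
    have zi: "(\<ominus>\<^bsub>cell_chains A F m\<^esub> z) y = \<ominus>\<^bsub>F y\<^esub> z y"
      by (rule chains_inv_apply[OF cr FF.modG z subS[OF y(1)] y(2)]) 
    show ?thesis unfolding w_def chains_add_apply[OF subS[OF y(1)] y(2)] zi deS[OF y]
      by (rule Fy.r_neg[OF zc])
  qed
  have wcyc: "m = 0 \<or> cell_diff R A F f (m - 1) w = \<zero>\<^bsub>cell_chains A F (m - 1)\<^esub>"
  proof (cases m)
    case 0 then show ?thesis by simp
  next
    case (Suc j)
    interpret Cj: module R "cell_chains A F j" by (rule FF.modC)
    have h: "cell_diff R A F f j \<in> module_hom R (cell_chains A F m) (cell_chains A F j)"
      using FF.diff_hom Suc by simp
    have e2: "e \<in> carrier (cell_chains A F (Suc (Suc j)))" using ec Suc by simp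
    have dz: "cell_diff R A F f j z = \<zero>\<^bsub>cell_chains A F j\<^esub>" using cyc Suc by simp
    have "cell_diff R A F f j w = cell_diff R A F f j (cell_diff R A F f m e) \<oplus>\<^bsub>cell_chains A F j\<^esub> \<ominus>\<^bsub>cell_chains A F j\<^esub> cell_diff R A F f j z"
      unfolding w_def using module_hom_add[OF h dec C.a_inv_closed[OF z]] module_hom_inv[OF FF.modC FF.modC h z] by simp
    also have "\<dots> = \<zero>\<^bsub>cell_chains A F j\<^esub>"
      using FF.dd0[OF e2] dz Suc mg_minus_zero[OF FF.modC] by simp
    finally show ?thesis using Suc by simp
  qed
  have "w = \<zero>\<^bsub>cell_chains A F m\<^esub>" by (rule vanish[OF wc wcyc wS])
  then have "cell_diff R A F f m e = z" using mg_eq[OF FF.modC dec z] unfolding w_def by blast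
  then show ?thesis using ec Pe by blast
qed

end




context thm5
begin

lemma main_iso: "module_isomorphic R (HC R A F f k) (HC R (A - {a}) G gq k)"
proof -
  interpret R: cring R by (rule cr)
  interpret C: module R "cell_chains A F k" by (rule FF.modC)
  interpret Q: module R "cell_chains (A - {a}) G k" by (rule QQ.modC)
  have B: "submod R (cell_chains A F k) (cell_boundaries R A F f k)"
    unfolding cell_boundaries_def by (rule hom_image_submod[OF FF.modC FF.modC FF.diff_hom])
  have B': "submod R (cell_chains (A - {a}) G k) (cell_boundaries R (A - {a}) G gq k)"
    unfolding cell_boundaries_def by (rule hom_image_submod[OF QQ.modC QQ.modC QQ.diff_hom])
  have Zsub: "cell_cycles R A F f k \<subseteq> carrier (cell_chains A F k)"
    unfolding cell_cycles_def by blast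
  have Z'sub: "cell_cycles R (A - {a}) G gq k \<subseteq> carrier (cell_chains (A - {a}) G k)"
    unfolding cell_cycles_def by blast
  have cycI: "c \<in> cell_cycles R A F f k" if "c \<in> carrier (cell_chains A F k)"
    "\<And>j. k = Suc j \<Longrightarrow> cell_diff R A F f j c = \<zero>\<^bsub>cell_chains A F j\<^esub>" for c
    unfolding cell_cycles_def using that by (cases k) auto
  have cycD: "c \<in> carrier (cell_chains A F k)" "k = Suc j \<Longrightarrow> cell_diff R A F f j c = \<zero>\<^bsub>cell_chains A F j\<^esub>"
    if "c \<in> cell_cycles R A F f k" for c j
    using that unfolding cell_cycles_def by auto
  have qcycI: "c \<in> cell_cycles R (A - {a}) G gq k" if "c \<in> carrier (cell_chains (A - {a}) G k)"
    "\<And>j. k = Suc j \<Longrightarrow> cell_diff R (A - {a}) G gq j c = \<zero>\<^bsub>cell_chains (A - {a}) G j\<^esub>" for c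
    unfolding cell_cycles_def using that by (cases k) auto
  have qcycD: "c \<in> carrier (cell_chains (A - {a}) G k)" "k = Suc j \<Longrightarrow> cell_diff R (A - {a}) G gq j c = \<zero>\<^bsub>cell_chains (A - {a}) G j\<^esub>"
    if "c \<in> cell_cycles R (A - {a}) G gq k" for c j
    using that unfolding cell_cycles_def by auto
  have Zcl: "x \<oplus>\<^bsub>cell_chains A F k\<^esub> \<ominus>\<^bsub>cell_chains A F k\<^esub> y \<in> cell_cycles R A F f k"
    if xy: "x \<in> cell_cycles R A F f k" "y \<in> cell_cycles R A F f k" for x y
  proof (rule cycI)
    have xc: "x \<in> carrier (cell_chains A F k)" "y \<in> carrier (cell_chains A F k)" using cycD(1) xy by auto
    show "x \<oplus>\<^bsub>cell_chains A F k\<^esub> \<ominus>\<^bsub>cell_chains A F k\<^esub> y \<in> carrier (cell_chains A F k)" using xc by simp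
    fix j assume kj: "k = Suc j"
    have h: "cell_diff R A F f j \<in> module_hom R (cell_chains A F k) (cell_chains A F j)" using FF.diff_hom kj by simp
    interpret Cj: module R "cell_chains A F j" by (rule FF.modC)
    have "cell_diff R A F f j (x \<oplus>\<^bsub>cell_chains A F k\<^esub> \<ominus>\<^bsub>cell_chains A F k\<^esub> y)
        = cell_diff R A F f j x \<oplus>\<^bsub>cell_chains A F j\<^esub> \<ominus>\<^bsub>cell_chains A F j\<^esub> cell_diff R A F f j y"
      using module_hom_add[OF h xc(1) C.a_inv_closed[OF xc(2)]] module_hom_inv[OF FF.modC FF.modC h xc(2)] by simp
    also have "\<dots> = \<zero>\<^bsub>cell_chains A F j\<^esub>" using cycD(2)[OF xy(1) kj] cycD(2)[OF xy(2) kj] mg_minus_zero[OF FF.modC] by simp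
    finally show "cell_diff R A F f j (x \<oplus>\<^bsub>cell_chains A F k\<^esub> \<ominus>\<^bsub>cell_chains A F k\<^esub> y) = \<zero>\<^bsub>cell_chains A F j\<^esub>" .
  qed
  have phiZ: "Phi k z \<in> cell_cycles R (A - {a}) G gq k" if z: "z \<in> cell_cycles R A F f k" for z
  proof (rule qcycI)
    show "Phi k z \<in> carrier (cell_chains (A - {a}) G k)" using Phi_closed cycD(1)[OF z] by blast
    fix j assume kj: "k = Suc j"
    have zc: "z \<in> carrier (cell_chains A F (Suc j))" using cycD(1)[OF z] kj by simp
    have "cell_diff R (A - {a}) G gq j (Phi k z) = Phi j (cell_diff R A F f j z)"
      using Phi_chain[OF zc] kj by simp
    also have "\<dots> = Phi j \<zero>\<^bsub>cell_chains A F j\<^esub>" using cycD(2)[OF z kj] by simp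
    also have "\<dots> = \<zero>\<^bsub>cell_chains (A - {a}) G j\<^esub>" by (rule module_hom_zero[OF FF.modC QQ.modC Phi_hom])
    finally show "cell_diff R (A - {a}) G gq j (Phi k z) = \<zero>\<^bsub>cell_chains (A - {a}) G j\<^esub>" .
  qed
  have phiB: "Phi k b \<in> cell_boundaries R (A - {a}) G gq k" if b: "b \<in> cell_boundaries R A F f k" for b
  proof -
    obtain c where c: "c \<in> carrier (cell_chains A F (Suc k))" "b = cell_diff R A F f k c"
      using b unfolding cell_boundaries_def by blast
    have "Phi k b = cell_diff R (A - {a}) G gq k (Phi (Suc k) c)" using Phi_chain[OF c(1)] c(2) by simp
    then show ?thesis unfolding cell_boundaries_def using Phi_closed[OF c(1)] by blast
  qed
  have inj: "z \<in> cell_boundaries R A F f k"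
    if z: "z \<in> cell_cycles R A F f k" and pz: "Phi k z \<in> cell_boundaries R (A - {a}) G gq k" for z
  proof -
    have zc: "z \<in> carrier (cell_chains A F k)" using cycD(1)[OF z] .
    obtain q where q: "q \<in> carrier (cell_chains (A - {a}) G (Suc k))" "Phi k z = cell_diff R (A - {a}) G gq k q"
      using pz unfolding cell_boundaries_def by blast
    obtain c where c: "c \<in> carrier (cell_chains A F (Suc k))" "Phi (Suc k) c = q" using Phi_lift[OF q(1)] by blast
    define d where "d = cell_diff R A F f k c"
    have dc: "d \<in> carrier (cell_chains A F k)" unfolding d_def using FF.diff_closed[OF c(1)] .
    have Pd: "Phi k d = Phi k z" unfolding d_def using Phi_chain[OF c(1)] c(2) q(2) by simp
    define z' where "z' = z \<oplus>\<^bsub>cell_chains A F k\<^esub> \<ominus>\<^bsub>cell_chains A F k\<^esub> d"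
    have z'c: "z' \<in> carrier (cell_chains A F k)" unfolding z'_def using zc dc by simp
    have Pz': "Phi k z' = \<zero>\<^bsub>cell_chains (A - {a}) G k\<^esub>"
    proof -
      have "Phi k z' = Phi k z \<oplus>\<^bsub>cell_chains (A - {a}) G k\<^esub> \<ominus>\<^bsub>cell_chains (A - {a}) G k\<^esub> Phi k d"
        unfolding z'_def using module_hom_add[OF Phi_hom zc C.a_inv_closed[OF dc]] module_hom_inv[OF FF.modC QQ.modC Phi_hom dc]
        by simp
      also have "\<dots> = \<zero>\<^bsub>cell_chains (A - {a}) G k\<^esub>" unfolding Pd using Phi_closed[OF zc] by (simp add: Q.r_neg)
      finally show ?thesis .
    qed
    have cz': "k = 0 \<or> cell_diff R A F f (k - 1) z' = \<zero>\<^bsub>cell_chains A F (k - 1)\<^esub>"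
    proof (cases k)
      case 0 then show ?thesis by simp
    next
      case (Suc j)
      interpret Cj: module R "cell_chains A F j" by (rule FF.modC)
      have h: "cell_diff R A F f j \<in> module_hom R (cell_chains A F k) (cell_chains A F j)" using FF.diff_hom Suc by simp
      have c2: "c \<in> carrier (cell_chains A F (Suc (Suc j)))" using c(1) Suc by simp
      have "cell_diff R A F f j z' = cell_diff R A F f j z \<oplus>\<^bsub>cell_chains A F j\<^esub> \<ominus>\<^bsub>cell_chains A F j\<^esub> cell_diff R A F f j d"
        unfolding z'_def using module_hom_add[OF h zc C.a_inv_closed[OF dc]] module_hom_inv[OF FF.modC FF.modC h dc] by simp
      also have "\<dots> = \<zero>\<^bsub>cell_chains A F j\<^esub>"
        using cycD(2)[OF z Suc] FF.dd0[OF c2] Suc mg_minus_zero[OF FF.modC] unfolding d_def by simp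
      finally show ?thesis using Suc by simp
    qed
    obtain e where e: "e \<in> carrier (cell_chains A F (Suc k))" "cell_diff R A F f k e = z'"
      using kill[OF z'c cz' Pz'] by blast
    interpret C1: module R "cell_chains A F (Suc k)" by (rule FF.modC)
    have "z = z' \<oplus>\<^bsub>cell_chains A F k\<^esub> d"
    proof -
      have "z' \<oplus>\<^bsub>cell_chains A F k\<^esub> d = z \<oplus>\<^bsub>cell_chains A F k\<^esub> (\<ominus>\<^bsub>cell_chains A F k\<^esub> d \<oplus>\<^bsub>cell_chains A F k\<^esub> d)"
        unfolding z'_def using zc dc by (simp add: C.a_assoc)
      also have "\<dots> = z" using zc dc by (simp add: C.l_neg)
      finally show ?thesis by simp
    qed
    also have "\<dots> = cell_diff R A F f k (e \<oplus>\<^bsub>cell_chains A F (Suc k)\<^esub> c)"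
      unfolding d_def e(2)[symmetric] using module_hom_add[OF FF.diff_hom e(1) c(1)] by simp
    finally show ?thesis unfolding cell_boundaries_def using e(1) c(1) by simp
  qed
  have surj: "\<exists>z\<in>cell_cycles R A F f k. Phi k z \<oplus>\<^bsub>cell_chains (A - {a}) G k\<^esub> \<ominus>\<^bsub>cell_chains (A - {a}) G k\<^esub> zb
      \<in> cell_boundaries R (A - {a}) G gq k"
    if zb: "zb \<in> cell_cycles R (A - {a}) G gq k" for zb
  proof -
    have zbc: "zb \<in> carrier (cell_chains (A - {a}) G k)" using qcycD(1)[OF zb] .
    obtain c where c: "c \<in> carrier (cell_chains A F k)" "Phi k c = zb" using Phi_lift[OF zbc] by blast
    have B'0: "\<zero>\<^bsub>cell_chains (A - {a}) G k\<^esub> \<in> cell_boundaries R (A - {a}) G gq k"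
      using submodD(2)[OF QQ.modC B'] .
    show ?thesis
    proof (cases k)
      case 0
      have "c \<in> cell_cycles R A F f k" by (rule cycI[OF c(1)]) (use 0 in simp)
      moreover have "Phi k c \<oplus>\<^bsub>cell_chains (A - {a}) G k\<^esub> \<ominus>\<^bsub>cell_chains (A - {a}) G k\<^esub> zb = \<zero>\<^bsub>cell_chains (A - {a}) G k\<^esub>"
        using c(2) zbc by (simp add: Q.r_neg)
      ultimately show ?thesis using B'0 by metis
    next
      case (Suc j)
      define w where "w = cell_diff R A F f j c"
      have c1: "c \<in> carrier (cell_chains A F (Suc j))" using c(1) Suc by simp
      have wc: "w \<in> carrier (cell_chains A F j)" unfolding w_def using FF.diff_closed[OF c1] .
      have Pw: "Phi j w = \<zero>\<^bsub>cell_chains (A - {a}) G j\<^esub>"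
        unfolding w_def Phi_chain[OF c1] using c(2) Suc qcycD(2)[OF zb Suc] by simp
      have cw: "j = 0 \<or> cell_diff R A F f (j - 1) w = \<zero>\<^bsub>cell_chains A F (j - 1)\<^esub>"
      proof (cases j)
        case 0 then show ?thesis by simp
      next
        case (Suc i)
        have "c \<in> carrier (cell_chains A F (Suc (Suc i)))" using c1 Suc by simp
        then show ?thesis unfolding w_def using FF.dd0 Suc by simp
      qed
      obtain e where e: "e \<in> carrier (cell_chains A F (Suc j))" "Phi (Suc j) e = \<zero>\<^bsub>cell_chains (A - {a}) G (Suc j)\<^esub>"
        "cell_diff R A F f j e = w"
        using kill[OF wc cw Pw] by blast
      have ek: "e \<in> carrier (cell_chains A F k)" "Phi k e = \<zero>\<^bsub>cell_chains (A - {a}) G k\<^esub>" using e Suc by auto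
      define z where "z = c \<oplus>\<^bsub>cell_chains A F k\<^esub> \<ominus>\<^bsub>cell_chains A F k\<^esub> e"
      have zc: "z \<in> carrier (cell_chains A F k)" unfolding z_def using c(1) ek by simp
      have zcyc: "z \<in> cell_cycles R A F f k"
      proof (rule cycI[OF zc])
        fix j' assume kj: "k = Suc j'"
        then have jj: "j' = j" using Suc by simp
        interpret Cj: module R "cell_chains A F j" by (rule FF.modC)
        have h: "cell_diff R A F f j \<in> module_hom R (cell_chains A F k) (cell_chains A F j)" using FF.diff_hom Suc by simp
        have "cell_diff R A F f j z = w \<oplus>\<^bsub>cell_chains A F j\<^esub> \<ominus>\<^bsub>cell_chains A F j\<^esub> w"
          unfolding z_def using module_hom_add[OF h c(1) C.a_inv_closed[OF ek(1)]] module_hom_inv[OF FF.modC FF.modC h ek(1)]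
            e(3) w_def by simp
        also have "\<dots> = \<zero>\<^bsub>cell_chains A F j\<^esub>" using wc by (simp add: Cj.r_neg)
        finally show "cell_diff R A F f j' z = \<zero>\<^bsub>cell_chains A F j'\<^esub>" using jj by simp
      qed
      have "Phi k z = zb \<oplus>\<^bsub>cell_chains (A - {a}) G k\<^esub> \<ominus>\<^bsub>cell_chains (A - {a}) G k\<^esub> \<zero>\<^bsub>cell_chains (A - {a}) G k\<^esub>"
        unfolding z_def using module_hom_add[OF Phi_hom c(1) C.a_inv_closed[OF ek(1)]] module_hom_inv[OF FF.modC QQ.modC Phi_hom ek(1)]
          c(2) ek(2) by simp
      also have "\<dots> = zb" using zbc mg_minus_zero[OF QQ.modC] by simp
      finally have "Phi k z \<oplus>\<^bsub>cell_chains (A - {a}) G k\<^esub> \<ominus>\<^bsub>cell_chains (A - {a}) G k\<^esub> zb = \<zero>\<^bsub>cell_chains (A - {a}) G k\<^esub>"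
        using zbc by (simp add: Q.r_neg)
      then show ?thesis using zcyc B'0 by metis
    qed
  qed
  show ?thesis unfolding HC_def
    by (rule quot_iso[OF FF.modC QQ.modC B B' Zsub Zcl Z'sub Phi_hom phiZ phiB inj surj])
qed

end

theorem theorem5:
  fixes R :: "'r ring" and A :: "'a::linorder set" and a :: 'a
    and F :: "'a set \<Rightarrow> ('r, 'm) module" and f :: "'a set \<Rightarrow> 'a set \<Rightarrow> 'm \<Rightarrow> 'm"
  assumes "cring R"
    and "finite A"
    and "is_sheaf R A F f"
    and "a \<in> A"
    and "\<forall>x. x \<subseteq> A - {a} \<longrightarrow> inj_on (f (insert a x) x) (carrier (F (insert a x)))"
  shows "\<forall>k. module_isomorphic R (HC R A F f k)
              (HC R (A - {a}) (quot_sheaf F f a) (quot_sheaf_map F f a) k)"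
proof
  fix k
  interpret T: thm5 R A a F f by (rule thm5.intro[OF assms])
  show "module_isomorphic R (HC R A F f k) (HC R (A - {a}) (quot_sheaf F f a) (quot_sheaf_map F f a) k)"
    by (rule T.main_iso)
qed


end
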